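(* Fix $\omega\in\Omega_*$ and suppose $v^\varepsilon\in L^2(\mu^\varepsilon_\omega)$ converges weakly two-scale to $v\in L^2(\mathbb R^d\times\Omega,dx\times\mu)$. Then for every $j\ge1$, $e\in\mathcal B$, continuous $\psi:\Omega\to\mathbb R$ and continuous compactly supported $\varphi:\mathbb R^d\to\mathbb R$, $$\lim_{\varepsilon\downarrow0}\int_{\mathbb R^d}v^\varepsilon(x)\varphi(x)\psi(\tau_{x/\varepsilon}\omega)\Psi_{j,e}(\tau_{x/\varepsilon}\omega)\mu^\varepsilon_\omega(dx)=\int_{\mathbb R^d}dx\int_\Omega v(x,\omega')\varphi(x)\psi(\omega')\Psi_{j,e}(\omega')\mu(d\omega').$$
   Context: Setting: $d\ge2$, $c_0>0$, $\mathbb E_d$ non-oriented nearest-neighbour bonds of $\mathbb Z^d$, $\Omega=[0,c_0]^{\mathbb E_d}$ (product topology), $\omega(x,y)=\omega(\{x,y\})$, $\tau_x\omega(\{y,z\})=\omega(\{y+x,z+x\})$. $\mathbb Q$ Borel probability on $\Omega$, invariant and ergodic under $(\tau_x)$. $\Omega_0$: the $\omega$ for which the graph of bonds with $\omega(b)>0$ has a unique infinite cluster, vertex set $\mathcal C(\omega)$; $\mathbb Q(\Omega_0)=1$; $m=\mathbb Q(0\in\mathcal C(\omega))$. $\mathcal B=\{e\in\mathbb Z^d:|e|=1\}$. $\mu^\varepsilon_\omega=\varepsilon^d\sum_{x\in\mathcal C(\omega)}\delta_{\varepsilon x}$. $\mu(d\omega)=\mathbb 1_{\{0\in\mathcal C(\omega)\}}\mathbb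 Q(d\omega)$; $\int v\,dM=\sum_{e\in\mathcal B}\int\omega(0,e)v(\omega,e)\mu(d\omega)$; $\hat\omega(0,e)=\mathbb 1_{\{\omega(0,e)>0\}}$; $\nabla^{(\omega)}u(\omega,e)=\hat\omega(0,e)[u(\tau_e\omega)-u(\omega)]$; $\nabla^{(\omega)*}v(\omega)=\sum_e\omega(0,e)[v(\omega,e)-v(\tau_e\omega,-e)]$; $L^2_{\rm sol}(M)$ is the orthogonal complement of the closure of gradients of local functions. Regular environments: fix $(\psi_j)$ dense in $L^2_{\rm sol}(M)$ (fixed representatives), $\Psi_{j,e}(\omega)=\sqrt{\omega(0,e)}\psi_j(\omega,e)$, and continuous $f^{(k)}_{j,e}\to\Psi_{j,e}$ in $L^2(\mu)$. $\Omega_{*,j}$: $\omega\in\Omega_0$ with $\nabla^{(\omega)*}\psi_j(\tau_x\omega)=0$ for all $x\in\mathcal C(\omega)$ and $\lim_{\varepsilon\downarrow0}\int_{[-n,n]^d}(f^{(k)}_{j,e}-\Psi_{j,e})^2(\tau_{z/\varepsilon}\omega)\mu^\varepsilon_\omega(dz)=(2n)^d\|f^{(k)}_{j,e}-\Psi_{j,e}\|^2_{L^2(\mu)}$ for all $e,k,n$. $\Omega_1$: $\omega\in\Omega_0$ with $\mu^\varepsilon_\omega([-\ell,\ell]^d)\to m(2\ell)^d$ for all $\ell>0$ and $\int\varphi(z)u(\tau_{z/\varepsilon}\omega)\mu^\varepsilon_\omega(dz)\to\int\varphi\,dz\int u\,d\mu$ for all $\varphi\in C_c(\mathbb R^d)$,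 $u\in C(\Omega)$. $\Omega_*=\Omega_1\cap\bigcap_j\Omega_{*,j}$. Two-scale convergence: for $\omega\in\Omega_*$, $v^\varepsilon\in L^2(\mu^\varepsilon_\omega)$ converges weakly two-scale to $v\in L^2(\mathbb R^d\times\Omega,dx\times\mu)$ if $\limsup_{\varepsilon\downarrow0}\|v^\varepsilon\|_{L^2(\mu^\varepsilon_\omega)}<\infty$ and $\lim_{\varepsilon\downarrow0}\int v^\varepsilon(x)\varphi(x)\psi(\tau_{x/\varepsilon}\omega)\mu^\varepsilon_\omega(dx)=\int dx\int v(x,\omega')\varphi(x)\psi(\omega')\mu(d\omega')$ for all $\varphi\in C_c^\infty(\mathbb R^d)$, $\psi\in C(\Omega)$. *)

theory Defs
  imports "HOL-Analysis.Analysis"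
begin

text \<open>The dimension d is CARD('d) for a finite index type 'd; Z^d is int^'d, R^d is real^'d.
Environments are functions from (unordered) pairs of lattice sites, represented as
two-element sets, to the reals; they vanish off nearest-neighbour bonds.\<close>

type_synonym 'd env = "(int ^ 'd) set \<Rightarrow> real"

definition uvec :: "'d::finite \<Rightarrow> int ^ 'd" where
  "uvec i = (\<chi> j. if j = i then 1 else 0)"

definition Bset :: "(int ^ 'd::finite) set" where
  "Bset = {e. \<exists>i. e = uvec i \<or> e = - uvec i}"

definition bonds :: "(int ^ 'd::finite) set set" where
  "bonds = {{x, x + e} | x e. e \<in> Bset}"

text \<open>Omega = [0,c0]^{E_d}, embedded in the product space of all real functions on
pairs of sites (zero off bonds); it carries the (subspace of the) product topology.\<close>
definition Omega :: "real \<Rightarrow> ('d::finite) env set" where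
  "Omega c0 = {\<omega>. \<forall>b. (b \<in> bonds \<longrightarrow> 0 \<le> \<omega> b \<and> \<omega> b \<le> c0) \<and> (b \<notin> bonds \<longrightarrow> \<omega> b = 0)}"

definition wval :: "('d::finite) env \<Rightarrow> int ^ 'd \<Rightarrow> int ^ 'd \<Rightarrow> real" where
  "wval \<omega> x y = \<omega> {x, y}"

definition tau :: "int ^ 'd::finite \<Rightarrow> 'd env \<Rightarrow> 'd env" where
  "tau x \<omega> = (\<lambda>b. \<omega> ((\<lambda>y. y + x) ` b))"

definition adj :: "('d::finite) env \<Rightarrow> int ^ 'd \<Rightarrow> int ^ 'd \<Rightarrow> bool" where
  "adj \<omega> x y \<longleftrightarrow> {x, y} \<in> bonds \<and> \<omega> {x, y} > 0"

definition clusters :: "('d::finite) env \<Rightarrow> (int ^ 'd) set set" where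
  "clusters \<omega> = UNIV // {(x, y). (adj \<omega>)\<^sup>*\<^sup>* x y}"

definition Omega0 :: "real \<Rightarrow> ('d::finite) env set" where
  "Omega0 c0 = {\<omega> \<in> Omega c0. \<exists>!K. K \<in> clusters \<omega> \<and> infinite K}"

text \<open>C(omega): the unique infinite cluster (meaningful for omega in Omega0).\<close>
definition Cl :: "('d::finite) env \<Rightarrow> (int ^ 'd) set" where
  "Cl \<omega> = (THE K. K \<in> clusters \<omega> \<and> infinite K)"

definition D0 :: "real \<Rightarrow> ('d::finite) env set" where
  "D0 c0 = {\<omega> \<in> Omega0 c0. 0 \<in> Cl \<omega>}"

definition standing :: "real \<Rightarrow> ('d::finite) env measure \<Rightarrow> bool" where
  "standing c0 Q \<longleftrightarrow>
     CARD('d) \<ge> 2 \<and> c0 > 0 \<and>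
     sets Q = sets (restrict_space borel (Omega c0)) \<and>
     emeasure Q (space Q) = 1 \<and>
     (\<forall>x. tau x \<in> measurable Q Q \<and> distr Q Q (tau x) = Q) \<and>
     (\<forall>A \<in> sets Q. (\<forall>x. tau x -` A \<inter> space Q = A) \<longrightarrow> measure Q A = 0 \<or> measure Q A = 1) \<and>
     emeasure Q (Omega0 c0) = 1 \<and>
     D0 c0 \<in> sets Q"

definition mdens :: "real \<Rightarrow> ('d::finite) env measure \<Rightarrow> real" where
  "mdens c0 Q = measure Q (D0 c0)"

definition mu :: "real \<Rightarrow> ('d::finite) env measure \<Rightarrow> 'd env measure" where
  "mu c0 Q = density Q (indicator (D0 c0))"

definition MM :: "real \<Rightarrow> ('d::finite) env measure \<Rightarrow> ('d env \<times> (int ^ 'd)) measure" where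
  "MM c0 Q = density (mu c0 Q \<Otimes>\<^sub>M count_space Bset) (\<lambda>(\<omega>, e). ennreal (wval \<omega> 0 e))"

definition L2 :: "'a measure \<Rightarrow> ('a \<Rightarrow> real) \<Rightarrow> bool" where
  "L2 M g \<longleftrightarrow> g \<in> borel_measurable M \<and> integrable M (\<lambda>x. (g x)\<^sup>2)"

definition local_fun :: "real \<Rightarrow> ('d::finite) env measure \<Rightarrow> ('d env \<Rightarrow> real) \<Rightarrow> bool" where
  "local_fun c0 Q u \<longleftrightarrow> u \<in> borel_measurable Q \<and> bounded (u ` Omega c0) \<and>
     (\<exists>F. finite F \<and> F \<subseteq> bonds \<and>
        (\<forall>\<omega>\<in>Omega c0. \<forall>\<omega>'\<in>Omega c0. (\<forall>b\<in>F. \<omega> b = \<omega>' b) \<longrightarrow> u \<omega> = u \<omega>'))"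

definition grad :: "(('d::finite) env \<Rightarrow> real) \<Rightarrow> 'd env \<times> (int ^ 'd) \<Rightarrow> real" where
  "grad u p = (case p of (\<omega>, e) \<Rightarrow>
      (if wval \<omega> 0 e > 0 then 1 else 0) * (u (tau e \<omega>) - u \<omega>))"

definition divg :: "(('d::finite) env \<times> (int ^ 'd) \<Rightarrow> real) \<Rightarrow> 'd env \<Rightarrow> real" where
  "divg v \<omega> = (\<Sum>e\<in>Bset. wval \<omega> 0 e * (v (\<omega>, e) - v (tau e \<omega>, - e)))"

text \<open>L^2_sol(M): elements of L^2(M) orthogonal to all gradients of local functions
(equivalently, to the closure of their span).\<close>
definition L2sol :: "real \<Rightarrow> ('d::finite) env measure \<Rightarrow> ('d env \<times> (int ^ 'd) \<Rightarrow> real) set" where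
  "L2sol c0 Q = {v. L2 (MM c0 Q) v \<and>
     (\<forall>u. local_fun c0 Q u \<longrightarrow> (\<integral>p. v p * grad u p \<partial>MM c0 Q) = 0)}"

definition Psi :: "(nat \<Rightarrow> ('d::finite) env \<times> (int ^ 'd) \<Rightarrow> real) \<Rightarrow> nat \<Rightarrow> int ^ 'd \<Rightarrow> 'd env \<Rightarrow> real" where
  "Psi \<psi> j e \<omega> = sqrt (wval \<omega> 0 e) * \<psi> j (\<omega>, e)"

definition regular_data :: "real \<Rightarrow> ('d::finite) env measure \<Rightarrow> (nat \<Rightarrow> 'd env \<times> (int ^ 'd) \<Rightarrow> real)
     \<Rightarrow> (nat \<Rightarrow> int ^ 'd \<Rightarrow> nat \<Rightarrow> 'd env \<Rightarrow> real) \<Rightarrow> bool" where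
  "regular_data c0 Q \<psi> f \<longleftrightarrow>
     (\<forall>j. \<psi> j \<in> L2sol c0 Q) \<and>
     (\<forall>v \<in> L2sol c0 Q. \<forall>\<delta>>0. \<exists>j. (\<integral>p. (v p - \<psi> j p)\<^sup>2 \<partial>MM c0 Q) < \<delta>) \<and>
     (\<forall>j. \<forall>e\<in>Bset. \<forall>k. continuous_on (Omega c0) (f j e k)) \<and>
     (\<forall>j. \<forall>e\<in>Bset.
        (\<forall>k. integrable (mu c0 Q) (\<lambda>\<omega>. (f j e k \<omega> - Psi \<psi> j e \<omega>)\<^sup>2)) \<and>
        (\<lambda>k. \<integral>\<omega>. (f j e k \<omega> - Psi \<psi> j e \<omega>)\<^sup>2 \<partial>mu c0 Q) \<longlonglongrightarrow> 0)"

definition lat :: "int ^ 'd::finite \<Rightarrow> real ^ 'd" where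
  "lat x = (\<chi> i. real_of_int (x $ i))"

text \<open>Lattice point of a real vector; only used at points z/eps with z in the support
eps*C(omega) of mu^eps_omega, where it recovers z/eps exactly.\<close>
definition tolat :: "real ^ 'd::finite \<Rightarrow> int ^ 'd" where
  "tolat y = (\<chi> i. \<lfloor>y $ i\<rfloor>)"

definition tau_r :: "real ^ 'd::finite \<Rightarrow> 'd env \<Rightarrow> 'd env" where
  "tau_r y \<omega> = tau (tolat y) \<omega>"

definition mu_eps :: "('d::finite) env \<Rightarrow> real \<Rightarrow> (real ^ 'd) measure" where
  "mu_eps \<omega> \<epsilon> = density (count_space UNIV)
     (\<lambda>z. ennreal (\<epsilon> ^ CARD('d)) * indicator ((\<lambda>x. \<epsilon> *\<^sub>R lat x) ` Cl \<omega>) z)"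

definition cube :: "real \<Rightarrow> (real ^ 'd::finite) set" where
  "cube l = {z. \<forall>i. - l \<le> z $ i \<and> z $ i \<le> l}"

definition Cc :: "('a::topological_space \<Rightarrow> real) \<Rightarrow> bool" where
  "Cc \<phi> \<longleftrightarrow> continuous_on UNIV \<phi> \<and> compact (closure {x. \<phi> x \<noteq> 0})"

fun Ck :: "nat \<Rightarrow> ('a::real_normed_vector \<Rightarrow> real) \<Rightarrow> bool" where
  "Ck 0 f = continuous_on UNIV f"
| "Ck (Suc k) f = (\<exists>Df. (\<forall>x. (f has_derivative Df x) (at x)) \<and> (\<forall>v. Ck k (\<lambda>x. Df x v)))"

definition Cc_inf :: "('a::real_normed_vector \<Rightarrow> real) \<Rightarrow> bool" where
  "Cc_inf \<phi> \<longleftrightarrow> (\<forall>k. Ck k \<phi>) \<and> compact (closure {x. \<phi> x \<noteq> 0})"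

definition Omega1 :: "real \<Rightarrow> ('d::finite) env measure \<Rightarrow> 'd env set" where
  "Omega1 c0 Q = {\<omega> \<in> Omega0 c0.
     (\<forall>l>0. ((\<lambda>\<epsilon>. measure (mu_eps \<omega> \<epsilon>) (cube l)) \<longlongrightarrow> mdens c0 Q * (2 * l) ^ CARD('d)) (at_right 0)) \<and>
     (\<forall>\<phi> u. Cc (\<phi> :: real ^ 'd \<Rightarrow> real) \<longrightarrow> continuous_on (Omega c0) u \<longrightarrow>
        ((\<lambda>\<epsilon>. \<integral>z. \<phi> z * u (tau_r ((1 / \<epsilon>) *\<^sub>R z) \<omega>) \<partial>mu_eps \<omega> \<epsilon>)
          \<longlongrightarrow> (\<integral>z. \<phi> z \<partial>lborel) * (\<integral>\<omega>'. u \<omega>' \<partial>mu c0 Q)) (at_right 0))}"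

definition Omega_star_j :: "real \<Rightarrow> ('d::finite) env measure \<Rightarrow> (nat \<Rightarrow> 'd env \<times> (int ^ 'd) \<Rightarrow> real)
     \<Rightarrow> (nat \<Rightarrow> int ^ 'd \<Rightarrow> nat \<Rightarrow> 'd env \<Rightarrow> real) \<Rightarrow> nat \<Rightarrow> 'd env set" where
  "Omega_star_j c0 Q \<psi> f j = {\<omega> \<in> Omega0 c0.
     (\<forall>x \<in> Cl \<omega>. divg (\<psi> j) (tau x \<omega>) = 0) \<and>
     (\<forall>e \<in> Bset. \<forall>k. \<forall>n::nat.
        ((\<lambda>\<epsilon>. \<integral>z. indicator (cube (real n)) z *
               (f j e k (tau_r ((1 / \<epsilon>) *\<^sub>R z) \<omega>) - Psi \<psi> j e (tau_r ((1 / \<epsilon>) *\<^sub>R z) \<omega>))\<^sup>2 \<partial>mu_eps \<omega> \<epsilon>)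
         \<longlongrightarrow> (2 * real n) ^ CARD('d) * (\<integral>\<omega>'. (f j e k \<omega>' - Psi \<psi> j e \<omega>')\<^sup>2 \<partial>mu c0 Q)) (at_right 0))}"

definition Omega_star :: "real \<Rightarrow> ('d::finite) env measure \<Rightarrow> (nat \<Rightarrow> 'd env \<times> (int ^ 'd) \<Rightarrow> real)
     \<Rightarrow> (nat \<Rightarrow> int ^ 'd \<Rightarrow> nat \<Rightarrow> 'd env \<Rightarrow> real) \<Rightarrow> 'd env set" where
  "Omega_star c0 Q \<psi> f = Omega1 c0 Q \<inter> (\<Inter>j. Omega_star_j c0 Q \<psi> f j)"

definition two_scale_weak :: "real \<Rightarrow> ('d::finite) env measure \<Rightarrow> 'd env
     \<Rightarrow> (real \<Rightarrow> real ^ 'd \<Rightarrow> real) \<Rightarrow> ((real ^ 'd) \<times> 'd env \<Rightarrow> real) \<Rightarrow> bool" where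
  "two_scale_weak c0 Q \<omega> v\<epsilon> v \<longleftrightarrow>
     (\<forall>\<epsilon>>0. L2 (mu_eps \<omega> \<epsilon>) (v\<epsilon> \<epsilon>)) \<and>
     L2 (lborel \<Otimes>\<^sub>M mu c0 Q) v \<and>
     Limsup (at_right 0) (\<lambda>\<epsilon>. ereal (sqrt (\<integral>x. (v\<epsilon> \<epsilon> x)\<^sup>2 \<partial>mu_eps \<omega> \<epsilon>))) < \<infinity> \<and>
     (\<forall>\<phi> g. Cc_inf (\<phi> :: real ^ 'd \<Rightarrow> real) \<longrightarrow> continuous_on (Omega c0) g \<longrightarrow>
        ((\<lambda>\<epsilon>. \<integral>x. v\<epsilon> \<epsilon> x * \<phi> x * g (tau_r ((1 / \<epsilon>) *\<^sub>R x) \<omega>) \<partial>mu_eps \<omega> \<epsilon>)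
          \<longlongrightarrow> (\<integral>x. (\<integral>\<omega>'. v (x, \<omega>') * \<phi> x * g \<omega>' \<partial>mu c0 Q) \<partial>lborel)) (at_right 0))"

end

theory Submission
  imports Defs "HOL-Computational_Algebra.Polynomial"
begin

lemma Ck_Suc_imp: "Ck (Suc k) f \<Longrightarrow> Ck k f"
proof (induction k arbitrary: f)
  case 0
  then obtain Df where "\<forall>x. (f has_derivative Df x) (at x)" by auto
  then show ?case by (auto intro!: continuous_at_imp_continuous_on has_derivative_continuous)
next
  case (Suc k)
  then obtain Df where "\<forall>x. (f has_derivative Df x) (at x)" "\<forall>v. Ck (Suc k) (\<lambda>x. Df x v)" by auto
  then show ?case using Suc.IH by auto
qed

lemma Ck_const: "Ck k (\<lambda>x. c)"
proof (induction k arbitrary: c)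
  case 0 then show ?case by simp
next
  case (Suc k)
  show ?case unfolding Ck.simps(2) by (rule exI[of _ "\<lambda>x v. 0"]) (auto simp: Suc.IH)
qed

lemma Ck_add: "Ck k f \<Longrightarrow> Ck k g \<Longrightarrow> Ck k (\<lambda>x. f x + g x)"
proof (induction k arbitrary: f g)
  case 0 then show ?case by (auto intro: continuous_on_add)
next
  case (Suc k)
  from Suc.prems obtain Df Dg where f: "\<forall>x. (f has_derivative Df x) (at x)" "\<forall>v. Ck k (\<lambda>x. Df x v)"
    and g: "\<forall>x. (g has_derivative Dg x) (at x)" "\<forall>v. Ck k (\<lambda>x. Dg x v)" by auto
  show ?case unfolding Ck.simps(2)
    by (rule exI[of _ "\<lambda>x v. Df x v + Dg x v"]) (use f g Suc.IH in \<open>auto intro: has_derivative_add\<close>)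
qed

lemma Ck_mult: "Ck k f \<Longrightarrow> Ck k g \<Longrightarrow> Ck k (\<lambda>x. f x * g x)"
proof (induction k arbitrary: f g)
  case 0 then show ?case by (auto intro: continuous_on_mult)
next
  case (Suc k)
  from Suc.prems obtain Df Dg where f: "\<forall>x. (f has_derivative Df x) (at x)" "\<forall>v. Ck k (\<lambda>x. Df x v)"
    and g: "\<forall>x. (g has_derivative Dg x) (at x)" "\<forall>v. Ck k (\<lambda>x. Dg x v)" by auto
  have fk: "Ck k f" "Ck k g" using Suc.prems Ck_Suc_imp by auto
  show ?case unfolding Ck.simps(2)
    apply (rule exI[of _ "\<lambda>x v. f x * Dg x v + Df x v * g x"])
    using f g Suc.IH fk by (auto intro!: has_derivative_mult Ck_add)
qed

lemma Ck_diff: "Ck k f \<Longrightarrow> Ck k g \<Longrightarrow> Ck k (\<lambda>x. f x - g x)"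
  using Ck_add[of k f "\<lambda>x. (-1) * g x"] Ck_mult[OF Ck_const[of k "-1"], of g] by simp

lemma Ck_linear: assumes L: "bounded_linear L" shows "Ck k L"
proof (cases k)
  case 0 then show ?thesis using L
    by (auto intro: linear_continuous_on)
next
  case (Suc k')
  show ?thesis unfolding Suc Ck.simps(2)
    by (rule exI[of _ "\<lambda>x v. L v"]) (auto simp: Ck_const L bounded_linear_imp_has_derivative)
qed

lemma Ck_poly: "polynomial_function (p :: 'a::real_normed_vector \<Rightarrow> real) \<Longrightarrow> Ck k p"
  unfolding real_polynomial_function_eq[symmetric]
  by (induction p rule: real_polynomial_function.induct) (auto intro: Ck_linear Ck_const Ck_add Ck_mult)

lemma Ck_comp:
  fixes H :: "nat \<Rightarrow> real \<Rightarrow> real"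
  assumes H: "\<And>n t. (H n has_real_derivative H (Suc n) t) (at t)"
  shows "Ck k p \<Longrightarrow> Ck k (\<lambda>x. H n (p x))"
proof (induction k arbitrary: p n)
  case 0
  have "continuous_on UNIV (H n)"
    using H by (auto intro!: continuous_at_imp_continuous_on DERIV_isCont)
  then show ?case using 0 by (auto intro: continuous_on_compose2)
next
  case (Suc k)
  from Suc.prems obtain Dp where p: "\<forall>x. (p has_derivative Dp x) (at x)" "\<forall>v. Ck k (\<lambda>x. Dp x v)" by auto
  have pk: "Ck k p" using Suc.prems Ck_Suc_imp by auto
  have d: "((\<lambda>x. H n (p x)) has_derivative (\<lambda>v. H (Suc n) (p x) * Dp x v)) (at x)" for x
    using has_derivative_compose[OF p(1)[rule_format, of x] H[of n "p x", unfolded has_field_derivative_def]]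
    by (simp add: o_def mult.commute)
  show ?case unfolding Ck.simps(2)
    apply (rule exI[of _ "\<lambda>x v. H (Suc n) (p x) * Dp x v"])
    using d p Suc.IH pk by (auto intro!: Ck_mult)
qed

lemma poly_exp_lim: "((\<lambda>s. poly Q s * exp (- s)) \<longlongrightarrow> (0::real)) at_top"
proof -
  have "((\<lambda>s. \<Sum>i\<le>degree Q. coeff Q i * (s ^ i / exp s)) \<longlongrightarrow> (\<Sum>i\<le>degree Q. coeff Q i * 0)) at_top"
    by (intro tendsto_intros tendsto_power_div_exp_0)
  moreover have "poly Q s * exp (- s) = (\<Sum>i\<le>degree Q. coeff Q i * (s ^ i / exp s))" for s
    by (simp add: poly_altdef exp_minus divide_inverse sum_distrib_right mult.assoc)
  ultimately show ?thesis by simp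
qed

fun Pb :: "nat \<Rightarrow> real poly" where
  "Pb 0 = 1"
| "Pb (Suc n) = [:0,0,1:] * (Pb n - pderiv (Pb n))"

definition Hb :: "nat \<Rightarrow> real \<Rightarrow> real" where
  "Hb n t = (if t > 0 then poly (Pb n) (1/t) * exp (- (1/t)) else 0)"

lemma Hb_deriv_pos:
  assumes t: "t > 0"
  shows "(Hb n has_real_derivative Hb (Suc n) t) (at t)"
proof -
  have d: "((\<lambda>t. poly (Pb n) (1/t) * exp (- (1/t))) has_real_derivative
      poly (pderiv (Pb n)) (1/t) * (- 1 / t^2) * exp (- (1/t)) + poly (Pb n) (1/t) * (exp (- (1/t)) * (1 / t^2))) (at t)"
    using t
    by (auto intro!: derivative_eq_intros DERIV_chain2[OF poly_DERIV] simp: power2_eq_square field_simps)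
  have eq: "poly (pderiv (Pb n)) (1/t) * (- 1 / t^2) * exp (- (1/t)) + poly (Pb n) (1/t) * (exp (- (1/t)) * (1 / t^2))
      = Hb (Suc n) t"
    using t by (simp add: Hb_def power2_eq_square field_simps)
  have ev: "\<forall>\<^sub>F y in nhds t. poly (Pb n) (1/y) * exp (- (1/y)) = Hb n y"
    using eventually_nhds_in_open[of "{0<..}" t] t
    by (auto simp: Hb_def elim!: eventually_mono)
  show ?thesis
    using d[unfolded eq] by (rule has_field_derivative_transform_within_open[of _ _ _ "{0<..}"]) (use t in \<open>auto simp: Hb_def\<close>)
qed

lemma Hb_deriv_neg:
  assumes t: "t < 0"
  shows "(Hb n has_real_derivative Hb (Suc n) t) (at t)"
proof -
  have "((\<lambda>_. 0::real) has_real_derivative 0) (at t)" by simp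
  then have "((Hb n) has_real_derivative 0) (at t)"
    by (rule has_field_derivative_transform_within_open[of _ _ _ "{..<0}"]) (use t in \<open>auto simp: Hb_def\<close>)
  moreover have "Hb (Suc n) t = 0" using t by (simp add: Hb_def)
  ultimately show ?thesis by simp
qed

lemma Hb_deriv_0: "(Hb n has_real_derivative Hb (Suc n) 0) (at 0)"
  unfolding DERIV_def
proof (rule filterlim_split_at)
  have "\<forall>\<^sub>F h in at_left (0::real). h < 0"
    by (simp add: eventually_at_filter)
  then have "\<forall>\<^sub>F h in at_left (0::real). 0 = (Hb n (0 + h) - Hb n 0) / h"
    by eventually_elim (auto simp: Hb_def)
  then show "((\<lambda>h. (Hb n (0 + h) - Hb n 0) / h) \<longlongrightarrow> Hb (Suc n) 0) (at_left 0)"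
    by (auto simp: Hb_def intro: tendsto_eventually[THEN tendsto_cong[THEN iffD1, rotated]] Lim_transform_eventually)
next
  have lim: "((\<lambda>s. poly (Pb n * [:0,1:]) s * exp (- s)) \<longlongrightarrow> (0::real)) at_top"
    by (rule poly_exp_lim)
  have L: "((\<lambda>h. poly (Pb n * [:0,1:]) (inverse h) * exp (- inverse h)) \<longlongrightarrow> (0::real)) (at_right 0)"
    by (rule filterlim_compose[OF lim filterlim_inverse_at_top_right])
  have "\<forall>\<^sub>F h in at_right (0::real). h > 0"
    by (simp add: eventually_at_filter)
  then have "\<forall>\<^sub>F h in at_right (0::real). poly (Pb n * [:0,1:]) (inverse h) * exp (- inverse h) = (Hb n (0 + h) - Hb n 0) / h"
    by eventually_elim (auto simp: Hb_def divide_inverse)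
  with L show "((\<lambda>h. (Hb n (0 + h) - Hb n 0) / h) \<longlongrightarrow> Hb (Suc n) 0) (at_right 0)"
    by (auto simp: Hb_def intro: Lim_transform_eventually)
qed

lemma Hb_deriv: "(Hb n has_real_derivative Hb (Suc n) t) (at t)"
  using Hb_deriv_pos Hb_deriv_neg Hb_deriv_0 by (cases t "0::real" rule: linorder_cases) auto

lemma Ck_inner_self: "Ck k (\<lambda>x::'a::real_inner. x \<bullet> x)"
proof (cases k)
  case 0 then show ?thesis by (auto intro: continuous_intros)
next
  case (Suc k')
  have "((\<lambda>x::'a. x \<bullet> x) has_derivative (\<lambda>v. 2 * (x \<bullet> v))) (at x)" for x
    by (auto intro!: derivative_eq_intros simp: inner_commute)
  moreover have "Ck k' (\<lambda>x::'a. 2 * (x \<bullet> v))" for v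
    by (rule Ck_linear) (auto intro: bounded_linear_intros)
  ultimately show ?thesis unfolding Suc Ck.simps(2)
    by (intro exI[of _ "\<lambda>x v. 2 * (x \<bullet> v)"]) auto
qed

lemma Hb0_pos: "t > 0 \<Longrightarrow> Hb 0 t = exp (- (1/t))"
  by (simp add: Hb_def)

lemma Hb0_bounds: "0 \<le> Hb 0 t" "Hb 0 t \<le> 1"
  by (auto simp: Hb_def)

lemma approx_Cc:
  fixes \<phi> :: "'a::euclidean_space \<Rightarrow> real"
  assumes cont: "continuous_on UNIV \<phi>" and R: "R > 0" and sup: "\<And>x. norm x \<ge> R \<Longrightarrow> \<phi> x = 0"
    and d: "\<delta> > 0"
  shows "\<exists>\<phi>'. Cc_inf \<phi>' \<and> (\<forall>x. \<bar>\<phi> x - \<phi>' x\<bar> \<le> \<delta>) \<and> (\<forall>x. norm x \<ge> R + 1 \<longrightarrow> \<phi>' x = 0)"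
proof -
  define bmp where "bmp x = Hb 0 ((R+1)^2 - x \<bullet> x)" for x :: 'a
  have Ckbmp: "Ck k bmp" for k
    unfolding bmp_def
    by (rule Ck_comp[of Hb, OF Hb_deriv]) (intro Ck_diff Ck_const Ck_inner_self)
  have contbmp: "continuous_on UNIV bmp" using Ckbmp[of 0] by simp
  have bmppos: "bmp x > 0 \<longleftrightarrow> norm x < R + 1" for x
  proof -
    have "x \<bullet> x = (norm x)^2" by (simp add: power2_norm_eq_inner)
    moreover have "(norm x)^2 < (R+1)^2 \<longleftrightarrow> norm x < R + 1"
      using R by (smt (verit) norm_ge_zero power_mono power_strict_mono zero_less_numeral pos2)
    ultimately show ?thesis by (auto simp: bmp_def Hb_def)
  qed
  have bmp01: "0 \<le> bmp x" "bmp x \<le> 1" for x by (auto simp: bmp_def Hb0_bounds)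
  have bmp0: "bmp x = 0" if "norm x \<ge> R + 1" for x using bmppos[of x] bmp01[of x] that by auto
  define q where "q x = \<phi> x / bmp x" for x
  have cq: "continuous_on UNIV q"
  proof -
    have "continuous_on {x. norm x < R + 1} q"
      unfolding q_def
      by (intro continuous_at_imp_continuous_on ballI isCont_divide)
        (use cont contbmp bmppos in \<open>auto simp: continuous_on_eq_continuous_at dest!: bmppos[THEN iffD2] intro: less_imp_neq[symmetric]\<close>)
    moreover have "continuous_on {x. norm x > R} q"
      by (rule continuous_on_cong[THEN iffD1, OF refl _ continuous_on_const[of _ 0]])
         (auto simp: q_def sup)
    ultimately have "continuous_on ({x. norm x < R + 1} \<union> {x. norm x > R}) q"
      by (intro continuous_on_open_Un) (auto intro: open_Collect_less continuous_intros)
    moreover have "{x. norm x < R + 1} \<union> {x::'a. norm x > R} = UNIV" by auto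
    ultimately show ?thesis by simp
  qed
  obtain p where p: "polynomial_function p" "\<forall>x\<in>cball 0 (R+1). norm (q x - p x) < \<delta>"
    using Stone_Weierstrass_polynomial_function[OF compact_cball[of 0 "R+1"] continuous_on_subset[OF cq] d] by auto
  define \<phi>' where "\<phi>' x = bmp x * p x" for x
  have zero: "\<phi>' x = 0" if "norm x \<ge> R + 1" for x using bmp0[OF that] by (simp add: \<phi>'_def)
  have "Ck k \<phi>'" for k unfolding \<phi>'_def by (intro Ck_mult Ckbmp Ck_poly p)
  moreover have "compact (closure {x. \<phi>' x \<noteq> 0})"
  proof -
    have "{x. \<phi>' x \<noteq> 0} \<subseteq> cball 0 (R+1)" using zero by (force simp: not_le)
    then show ?thesis using bounded_subset[OF bounded_cball] by simp
  qed
  moreover have "\<bar>\<phi> x - \<phi>' x\<bar> \<le> \<delta>" for x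
  proof (cases "norm x < R + 1")
    case True
    then have "bmp x > 0" using bmppos by auto
    then have "\<phi> x = bmp x * q x" by (simp add: q_def)
    then have "\<bar>\<phi> x - \<phi>' x\<bar> = bmp x * \<bar>q x - p x\<bar>"
      using bmp01[of x] by (simp add: \<phi>'_def abs_mult right_diff_distrib[symmetric])
    also have "\<dots> \<le> 1 * \<delta>"
      using p(2) True bmp01[of x] by (intro mult_mono) (auto simp: less_imp_le)
    finally show ?thesis by simp
  next
    case False
    then show ?thesis using zero[of x] sup[of x] R d by auto
  qed
  ultimately show ?thesis using zero by (auto simp: Cc_inf_def intro!: exI[of _ \<phi>'])
qed

lemma CS_real:
  fixes A B C :: real
  assumes "\<And>t. 0 \<le> t^2 * A - 2 * t * C + B" "A \<ge> 0"
  shows "C^2 \<le> A * B"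
proof (cases "A = 0")
  case True
  have "C = 0"
  proof (rule ccontr)
    assume "C \<noteq> 0"
    then have "0 \<le> B - 2 * ((B + 1) / (2 * C)) * C" using assms(1)[of "(B+1)/(2*C)"] True by simp
    also have "\<dots> = -1" using \<open>C \<noteq> 0\<close> by (simp add: field_simps)
    finally show False by simp
  qed
  then show ?thesis using True by simp
next
  case False
  then have A: "A > 0" using assms(2) by simp
  have "0 \<le> (C/A)^2 * A - 2 * (C/A) * C + B" by (rule assms(1))
  also have "\<dots> = B - C^2 / A" using A by (simp add: field_simps power2_eq_square)
  finally have "C^2 / A \<le> B" by simp
  then show ?thesis using A by (simp add: divide_le_eq mult.commute)
qed

lemma CS_integral:
  fixes a b :: "'a \<Rightarrow> real"
  assumes ia: "integrable M (\<lambda>x. (a x)^2)" and ib: "integrable M (\<lambda>x. (b x)^2)"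
    and iab: "integrable M (\<lambda>x. a x * b x)"
  shows "(\<integral>x. a x * b x \<partial>M)^2 \<le> (\<integral>x. (a x)^2 \<partial>M) * (\<integral>x. (b x)^2 \<partial>M)"
proof (rule CS_real)
  fix t :: real
  have "0 \<le> (\<integral>x. (t * a x - b x)^2 \<partial>M)" by simp
  also have "(\<integral>x. (t * a x - b x)^2 \<partial>M) = (\<integral>x. t^2 * (a x)^2 - 2 * t * (a x * b x) + (b x)^2 \<partial>M)"
    by (rule Bochner_Integration.integral_cong) (auto simp: power2_eq_square algebra_simps)
  also have "\<dots> = t^2 * (\<integral>x. (a x)^2 \<partial>M) - 2 * t * (\<integral>x. a x * b x \<partial>M) + (\<integral>x. (b x)^2 \<partial>M)"
    using ia ib iab by simp
  finally show "0 \<le> t^2 * (\<integral>x. (a x)^2 \<partial>M) - 2 * t * (\<integral>x. a x * b x \<partial>M) + (\<integral>x. (b x)^2 \<partial>M)" .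
qed simp

lemma shift_bond:
  assumes "b \<in> bonds" shows "(\<lambda>y. y + x) ` b \<in> bonds"
proof -
  from assms obtain y e where "b = {y, y + e}" "e \<in> Bset" by (auto simp: bonds_def)
  then have "(\<lambda>y. y + x) ` b = {y + x, (y + x) + e}" by (auto simp: algebra_simps)
  with \<open>e \<in> Bset\<close> show ?thesis unfolding bonds_def by blast
qed

lemma shift_bond_iff: "(\<lambda>y. y + x) ` b \<in> bonds \<longleftrightarrow> b \<in> bonds"
proof
  assume "(\<lambda>y. y + x) ` b \<in> bonds"
  from shift_bond[OF this, of "-x"] show "b \<in> bonds" by (simp add: image_image)
qed (rule shift_bond)

lemma tau_Omega: "\<omega> \<in> Omega c0 \<Longrightarrow> tau x \<omega> \<in> Omega c0"
  unfolding Omega_def tau_def by (auto simp: shift_bond_iff)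

lemma tau_r_Omega: "\<omega> \<in> Omega c0 \<Longrightarrow> tau_r y \<omega> \<in> Omega c0"
  unfolding tau_r_def by (rule tau_Omega)

lemma compact_Omega: "compact (Omega c0 :: ('d::finite) env set)"
proof -
  define S where "S b = (if b \<in> bonds then {0..c0} else {0::real})" for b :: "(int^'d) set"
  have eq: "Omega c0 = PiE UNIV S"
    unfolding Omega_def S_def PiE_def Pi_def extensional_def by auto
  show ?thesis
  proof (cases "Omega c0 = ({} :: ('d::finite) env set)")
    case True then show ?thesis by simp
  next
    case False
    have "compactin (product_topology (\<lambda>_. euclidean) UNIV) (PiE UNIV S)"
      unfolding compactin_PiE by (auto simp: S_def)
    then show ?thesis unfolding eq euclidean_product_topology by simp
  qed
qed

lemma bounded_on_Omega:
  assumes "continuous_on (Omega c0) (u :: ('d::finite) env \<Rightarrow> real)"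
  obtains U where "U \<ge> 0" "\<And>\<omega>. \<omega> \<in> Omega c0 \<Longrightarrow> \<bar>u \<omega>\<bar> \<le> U"
proof -
  have "compact (u ` Omega c0)" by (rule compact_continuous_image[OF assms compact_Omega])
  then obtain U where "\<forall>y\<in>u ` Omega c0. norm y \<le> U"
    using compact_imp_bounded bounded_iff by metis
  then show ?thesis using that[of "max U 0"] by fastforce
qed

lemma finite_int_box: "finite {x :: int ^ 'd::finite. \<forall>i. \<bar>x $ i\<bar> \<le> N}"
proof -
  have "{x :: int ^ 'd. \<forall>i. \<bar>x $ i\<bar> \<le> N} \<subseteq> vec_lambda ` (PiE UNIV (\<lambda>_. {-N..N}))"
  proof
    fix x :: "int ^ 'd" assume "x \<in> {x. \<forall>i. \<bar>x $ i\<bar> \<le> N}"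
    then have "\<bar>x $ i\<bar> \<le> N" for i by simp
    then have "-N \<le> x $ i \<and> x $ i \<le> N" for i by (metis abs_le_D1 abs_le_D2 minus_le_iff)
    then have "(\<lambda>i. x $ i) \<in> PiE UNIV (\<lambda>_. {-N..N})" by (simp add: PiE_def extensional_def)
    moreover have "x = vec_lambda (\<lambda>i. x $ i)" by simp
    ultimately show "x \<in> vec_lambda ` (PiE UNIV (\<lambda>_. {-N..N}))" by blast
  qed
  moreover have "finite (vec_lambda ` (PiE UNIV (\<lambda>_::'d. {-N..N})))"
    by (intro finite_imageI finite_PiE) auto
  ultimately show ?thesis by (rule finite_subset)
qed

lemma sets_mu_eps[simp]: "sets (mu_eps \<omega> \<epsilon>) = UNIV"
  by (simp add: mu_eps_def)

lemma measurable_mu_eps[simp]: "h \<in> borel_measurable (mu_eps \<omega> \<epsilon>)"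
  by (simp add: measurable_def)

lemma t1: "AE z in mu_eps \<omega> \<epsilon>. z \<in> (\<lambda>x. \<epsilon> *\<^sub>R lat x) ` Cl \<omega>"
  unfolding mu_eps_def
  apply (subst AE_density)
   apply simp
  apply (simp add: AE_count_space indicator_def)
  done

lemma t2: "emeasure (mu_eps \<omega> \<epsilon>) {a} < \<infinity>"
  unfolding mu_eps_def
  apply (subst emeasure_density)
    apply simp
   apply simp
  apply (subst nn_integral_indicator_singleton)
   apply simp
  apply (simp add: ennreal_mult_less_top indicator_def)
  done
lemma mu_eps_integrable:
  fixes h :: "real ^ 'd::finite \<Rightarrow> real"
  assumes e: "\<epsilon> > 0" and h: "\<And>z. z \<notin> cube r \<Longrightarrow> h z = 0"
  shows "integrable (mu_eps \<omega> \<epsilon>) h"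
proof -
  define S where "S = (\<lambda>x. \<epsilon> *\<^sub>R lat x) ` Cl \<omega>"
  define N where "N = \<lceil>r / \<epsilon>\<rceil>"
  define A where "A = (\<lambda>x. \<epsilon> *\<^sub>R lat x) ` (Cl \<omega> \<inter> {x :: int ^ 'd. \<forall>i. \<bar>x $ i\<bar> \<le> N})"
  have finA: "finite A" unfolding A_def using finite_int_box by auto
  have SA: "z \<in> A" if "z \<in> S" "z \<in> cube r" for z
  proof -
    from that obtain x where x: "x \<in> Cl \<omega>" "z = \<epsilon> *\<^sub>R lat x" by (auto simp: S_def)
    have "\<bar>x $ i\<bar> \<le> N" for i
    proof -
      have "- r \<le> \<epsilon> * real_of_int (x $ i) \<and> \<epsilon> * real_of_int (x $ i) \<le> r" using that(2) x unfolding cube_def lat_def by simp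
      then have "\<bar>\<epsilon> * real_of_int (x $ i)\<bar> \<le> r" by linarith
      then have "\<bar>real_of_int (x $ i)\<bar> \<le> r / \<epsilon>" using e by (simp add: abs_mult pos_le_divide_eq mult.commute)
      then have "real_of_int \<bar>x $ i\<bar> \<le> real_of_int N" using le_of_int_ceiling[of "r/\<epsilon>"] unfolding N_def by (simp only: of_int_abs)
      then show ?thesis by (simp only: of_int_le_iff)
    qed
    then show ?thesis using x by (auto simp: A_def)
  qed
  have AE: "AE z in mu_eps \<omega> \<epsilon>. z \<in> S"
    unfolding S_def by (rule t1)
  have single: "emeasure (mu_eps \<omega> \<epsilon>) {a} < \<infinity>" for a
    by (rule t2)
  have int: "integrable (mu_eps \<omega> \<epsilon>) (\<lambda>z. \<Sum>a\<in>A. h a * indicator {a} z)"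
    apply (rule Bochner_Integration.integrable_sum)
    apply (rule integrable_mult_right)
    apply (rule integrable_real_indicator)
    using single by auto
  have "AE z in mu_eps \<omega> \<epsilon>. (\<Sum>a\<in>A. h a * indicator {a} z) = h z"
    using AE
  proof eventually_elim
    case (elim z)
    show ?case
    proof (cases "z \<in> A")
      case True
      then have "(\<Sum>a\<in>A. h a * indicator {a} z) = (\<Sum>a\<in>A. if a = z then h z else 0)"
        by (intro sum.cong) (auto simp: indicator_def)
      also have "\<dots> = h z" using True finA by simp
      finally show ?thesis .
    next
      case False
      then have "z \<notin> cube r" using SA elim by auto
      then show ?thesis using False h by (auto simp: indicator_def intro!: sum.neutral)
    qed
  qed
  from integrable_cong_AE[OF measurable_mu_eps measurable_mu_eps this] int show ?thesis by simp
qed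

lemma prod_L2:
  fixes v w :: "'a::euclidean_space \<times> 'b \<Rightarrow> real"
  assumes fm: "finite_measure M2"
    and vm: "v \<in> borel_measurable (lborel \<Otimes>\<^sub>M M2)" and vi: "integrable (lborel \<Otimes>\<^sub>M M2) (\<lambda>p. (v p)^2)"
    and wm: "w \<in> borel_measurable (lborel \<Otimes>\<^sub>M M2)" and wi: "integrable (lborel \<Otimes>\<^sub>M M2) (\<lambda>p. (w p)^2)"
  shows "integrable (lborel \<Otimes>\<^sub>M M2) (\<lambda>p. v p * w p)"
    and "(\<integral>p. v p * w p \<partial>(lborel \<Otimes>\<^sub>M M2))^2 \<le> (\<integral>p. (v p)^2 \<partial>(lborel \<Otimes>\<^sub>M M2)) * (\<integral>p. (w p)^2 \<partial>(lborel \<Otimes>\<^sub>M M2))"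
    and "(\<integral>x. (\<integral>y. v (x, y) * w (x, y) \<partial>M2) \<partial>lborel) = (\<integral>p. v p * w p \<partial>(lborel \<Otimes>\<^sub>M M2))"
proof -
  interpret M2: finite_measure M2 by fact
  interpret P: pair_sigma_finite lborel M2 ..
  show int: "integrable (lborel \<Otimes>\<^sub>M M2) (\<lambda>p. v p * w p)"
  proof (rule Bochner_Integration.integrable_bound[of _ "\<lambda>p. (v p)^2 + (w p)^2"])
    show "integrable (lborel \<Otimes>\<^sub>M M2) (\<lambda>p. (v p)\<^sup>2 + (w p)\<^sup>2)" using vi wi by simp
    show "(\<lambda>p. v p * w p) \<in> borel_measurable (lborel \<Otimes>\<^sub>M M2)" using vm wm by measurable
    show "AE p in lborel \<Otimes>\<^sub>M M2. norm (v p * w p) \<le> norm ((v p)\<^sup>2 + (w p)\<^sup>2)"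
    proof (rule AE_I2)
      fix p
      have "0 \<le> (\<bar>v p\<bar> - \<bar>w p\<bar>)^2" by simp
      then have "2 * \<bar>v p * w p\<bar> \<le> (v p)^2 + (w p)^2"
        by (simp add: power2_diff abs_mult)
      then show "norm (v p * w p) \<le> norm ((v p)\<^sup>2 + (w p)\<^sup>2)" by simp
    qed
  qed
  show "(\<integral>p. v p * w p \<partial>(lborel \<Otimes>\<^sub>M M2))^2 \<le> (\<integral>p. (v p)^2 \<partial>(lborel \<Otimes>\<^sub>M M2)) * (\<integral>p. (w p)^2 \<partial>(lborel \<Otimes>\<^sub>M M2))"
    by (rule CS_integral[OF vi wi int])
  show "(\<integral>x. (\<integral>y. v (x, y) * w (x, y) \<partial>M2) \<partial>lborel) = (\<integral>p. v p * w p \<partial>(lborel \<Otimes>\<^sub>M M2))"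
    using P.integral_fst'[OF int] by simp
qed

lemma sep_L2:
  fixes c :: "'a::euclidean_space \<Rightarrow> real" and u :: "'b \<Rightarrow> real"
  assumes fm: "finite_measure M2"
    and cm: "c \<in> borel_measurable borel" and K: "K \<in> sets borel" "bounded K"
    and cb: "\<And>x. \<bar>c x\<bar> \<le> C * indicator K x" and C: "C \<ge> 0"
    and um: "u \<in> borel_measurable M2" and ui: "integrable M2 (\<lambda>y. (u y)^2)"
  shows "integrable (lborel \<Otimes>\<^sub>M M2) (\<lambda>p. (c (fst p) * u (snd p))^2)"
    and "(\<integral>p. (c (fst p) * u (snd p))^2 \<partial>(lborel \<Otimes>\<^sub>M M2)) \<le> C^2 * measure lborel K * (\<integral>y. (u y)^2 \<partial>M2)"
proof -
  interpret M2: finite_measure M2 by fact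
  interpret P: pair_sigma_finite lborel M2 ..
  define h where "h p = C^2 * (indicator K (fst p) * (u (snd p))^2)" for p
  have Kfin: "emeasure lborel K < \<infinity>" by (rule emeasure_bounded_finite[OF K(2)])
  have Km: "K \<in> sets lborel" using K by simp
  have hm: "h \<in> borel_measurable (lborel \<Otimes>\<^sub>M M2)" unfolding h_def using um Km by measurable
  have eq1: "(\<integral>y. norm (h (x, y)) \<partial>M2) = C^2 * indicator K x * (\<integral>y. (u y)^2 \<partial>M2)" for x
  proof -
    have "(\<integral>y. norm (h (x, y)) \<partial>M2) = (\<integral>y. C^2 * indicator K x * (u y)^2 \<partial>M2)"
      by (rule Bochner_Integration.integral_cong) (auto simp: h_def indicator_def)
    then show ?thesis by simp
  qed
  have eq2: "(\<integral>y. h (x, y) \<partial>M2) = C^2 * indicator K x * (\<integral>y. (u y)^2 \<partial>M2)" for x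
  proof -
    have "(\<integral>y. h (x, y) \<partial>M2) = (\<integral>y. C^2 * indicator K x * (u y)^2 \<partial>M2)"
      by (rule Bochner_Integration.integral_cong) (auto simp: h_def indicator_def)
    then show ?thesis by simp
  qed
  have indint: "integrable lborel (indicator K :: _ \<Rightarrow> real)"
    using Kfin Km by (rule_tac integrable_real_indicator) auto
  have hi: "integrable (lborel \<Otimes>\<^sub>M M2) h"
  proof (rule P.Fubini_integrable[OF hm])
    show "integrable lborel (\<lambda>x. \<integral>y. norm (h (x, y)) \<partial>M2)"
      unfolding eq1 using indint by (intro integrable_mult_left integrable_mult_right) auto
    show "AE x in lborel. integrable M2 (\<lambda>y. h (x, y))"
      unfolding h_def using ui by (intro AE_I2) auto
  qed
  have hint: "(\<integral>p. h p \<partial>(lborel \<Otimes>\<^sub>M M2)) = C^2 * measure lborel K * (\<integral>y. (u y)^2 \<partial>M2)"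
  proof -
    have "(\<integral>p. h p \<partial>(lborel \<Otimes>\<^sub>M M2)) = (\<integral>x. (\<integral>y. h (x, y) \<partial>M2) \<partial>lborel)"
      using P.integral_fst'[OF hi] by simp
    also have "\<dots> = (\<integral>x. C^2 * (\<integral>y. (u y)^2 \<partial>M2) * indicator K x \<partial>lborel)"
      unfolding eq2 by (simp add: mult_ac)
    also have "\<dots> = C^2 * (\<integral>y. (u y)^2 \<partial>M2) * measure lborel K"
      by simp
    finally show ?thesis by (simp add: mult_ac)
  qed
  have le: "(c (fst p) * u (snd p))^2 \<le> h p" for p
  proof -
    have "(c (fst p))^2 \<le> (C * indicator K (fst p))^2"
      using cb[of "fst p"] C by (simp add: abs_le_square_iff[symmetric] abs_le_iff)
    also have "\<dots> = C^2 * indicator K (fst p)" by (simp add: indicator_def power2_eq_square)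
    finally have "(c (fst p))^2 * (u (snd p))^2 \<le> C^2 * indicator K (fst p) * (u (snd p))^2"
      by (rule mult_right_mono) simp
    then show ?thesis by (simp add: h_def power_mult_distrib mult_ac)
  qed
  have wm: "(\<lambda>p. (c (fst p) * u (snd p))^2) \<in> borel_measurable (lborel \<Otimes>\<^sub>M M2)"
    using cm um by measurable
  show wi: "integrable (lborel \<Otimes>\<^sub>M M2) (\<lambda>p. (c (fst p) * u (snd p))^2)"
    by (rule Bochner_Integration.integrable_bound[OF hi wm]) (use le in \<open>auto intro!: AE_I2 simp: h_def\<close>)
  have "(\<integral>p. (c (fst p) * u (snd p))^2 \<partial>(lborel \<Otimes>\<^sub>M M2)) \<le> (\<integral>p. h p \<partial>(lborel \<Otimes>\<^sub>M M2))"
    by (rule integral_mono[OF wi hi le])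
  then show "(\<integral>p. (c (fst p) * u (snd p))^2 \<partial>(lborel \<Otimes>\<^sub>M M2)) \<le> C^2 * measure lborel K * (\<integral>y. (u y)^2 \<partial>M2)"
    using hint by simp
qed

lemma space_Q: "standing c0 Q \<Longrightarrow> space Q = Omega c0"
  unfolding standing_def using sets_eq_imp_space_eq[of Q "restrict_space borel (Omega c0)"]
  by (simp add: space_restrict_space)

lemma finite_Q: "standing c0 Q \<Longrightarrow> finite_measure Q"
  unfolding standing_def by (intro finite_measureI) simp

lemma finite_mu: "standing c0 Q \<Longrightarrow> finite_measure (mu c0 Q)"
  unfolding mu_def using finite_Q[of c0 Q]
  by (intro finite_measure.finite_measure_restricted) (auto simp: standing_def)

lemma space_mu: "standing c0 Q \<Longrightarrow> space (mu c0 Q) = Omega c0"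
  by (simp add: mu_def space_Q)

lemma sets_mu: "standing c0 Q \<Longrightarrow> sets (mu c0 Q) = sets (restrict_space borel (Omega c0))"
  by (simp add: mu_def standing_def)

lemma meas_mu: "standing c0 Q \<Longrightarrow> u \<in> borel_measurable (restrict_space borel (Omega c0)) \<Longrightarrow> u \<in> borel_measurable (mu c0 Q)"
  using measurable_cong_sets[OF sets_mu[of c0 Q] refl] by blast

lemma cont_meas_mu: "standing c0 Q \<Longrightarrow> continuous_on (Omega c0) u \<Longrightarrow> (u :: _ \<Rightarrow> real) \<in> borel_measurable (mu c0 Q)"
  by (rule meas_mu) (auto intro: borel_measurable_continuous_on_restrict)

lemma wval_meas: "standing c0 Q \<Longrightarrow> (\<lambda>\<omega>. wval \<omega> 0 e) \<in> borel_measurable (mu c0 Q)"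
  unfolding wval_def
  by (rule cont_meas_mu) (auto intro: continuous_on_subset[OF continuous_on_product_coordinates])

lemma Psi_meas:
  assumes "standing c0 Q" "regular_data c0 Q \<psi> f" "e \<in> Bset"
  shows "Psi \<psi> j e \<in> borel_measurable (mu c0 Q)"
proof -
  have "\<psi> j \<in> borel_measurable (MM c0 Q)" using assms(2) by (auto simp: regular_data_def L2sol_def L2_def)
  then have m: "\<psi> j \<in> borel_measurable (mu c0 Q \<Otimes>\<^sub>M count_space Bset)"
    unfolding MM_def using measurable_cong_sets[OF sets_density refl] by blast
  have "(\<lambda>\<omega>. (\<omega>, e)) \<in> measurable (mu c0 Q) (mu c0 Q \<Otimes>\<^sub>M count_space Bset)"
    using assms(3) by (intro measurable_Pair) auto
  from measurable_compose[OF this m] have "(\<lambda>\<omega>. \<psi> j (\<omega>, e)) \<in> borel_measurable (mu c0 Q)" .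
  then show ?thesis unfolding Psi_def[abs_def] using wval_meas[OF assms(1)] by measurable
qed

lemma bounded_sq_int:
  assumes "finite_measure M" "u \<in> borel_measurable M" "\<And>x. x \<in> space M \<Longrightarrow> \<bar>u x\<bar> \<le> U"
  shows "integrable M (\<lambda>x. (u x :: real)^2)"
    and "(\<integral>x. (u x)^2 \<partial>M) \<le> U^2 * measure M (space M)"
proof -
  interpret finite_measure M by fact
  have b: "(u x)^2 \<le> U^2" if "x \<in> space M" for x
    using assms(3)[OF that] by (simp add: abs_le_square_iff[symmetric] abs_le_iff)
  show i: "integrable M (\<lambda>x. (u x)^2)"
    by (rule integrable_const_bound[where B="U^2"]) (use b assms(2) in auto)
  have "(\<integral>x. (u x)^2 \<partial>M) \<le> (\<integral>x. U^2 \<partial>M)"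
    by (rule integral_mono) (use i b in auto)
  then show "(\<integral>x. (u x)^2 \<partial>M) \<le> U^2 * measure M (space M)" by (simp add: mult.commute)
qed

lemma approx_lim:
  fixes I :: "'a \<Rightarrow> real"
  assumes "\<And>\<eta>. \<eta> > 0 \<Longrightarrow> \<exists>A a. (A \<longlongrightarrow> a) F \<and> eventually (\<lambda>x. \<bar>I x - A x\<bar> \<le> \<eta>) F \<and> \<bar>J - a\<bar> \<le> \<eta>"
  shows "(I \<longlongrightarrow> J) F"
proof (rule tendstoI)
  fix \<eta> :: real assume "\<eta> > 0"
  then obtain A a where A: "(A \<longlongrightarrow> a) F" "eventually (\<lambda>x. \<bar>I x - A x\<bar> \<le> \<eta>/3) F" "\<bar>J - a\<bar> \<le> \<eta>/3"
    using assms[of "\<eta>/3"] by auto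
  have "eventually (\<lambda>x. dist (A x) a < \<eta>/3) F" using tendstoD[OF A(1), of "\<eta>/3"] \<open>\<eta> > 0\<close> by simp
  with A(2) show "eventually (\<lambda>x. dist (I x) J < \<eta>) F"
  proof eventually_elim
    case (elim x)
    then show ?case using A(3) by (simp add: dist_real_def) (smt (verit))
  qed
qed

lemma sq_to_abs: "(y::real)^2 \<le> c^2 \<Longrightarrow> c \<ge> 0 \<Longrightarrow> \<bar>y\<bar> \<le> c"
  using abs_le_square_iff[of y c] by simp

lemma eps_CS:
  fixes a b :: "real ^ 'd::finite \<Rightarrow> real"
  assumes e: "\<epsilon> > 0" and ai: "integrable (mu_eps \<omega> \<epsilon>) (\<lambda>z. (a z)^2)"
    and b0: "\<And>z. z \<notin> cube r \<Longrightarrow> b z = 0"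
    and aV: "(\<integral>z. (a z)^2 \<partial>mu_eps \<omega> \<epsilon>) \<le> V" and bB: "(\<integral>z. (b z)^2 \<partial>mu_eps \<omega> \<epsilon>) \<le> B"
  shows "(\<integral>z. a z * b z \<partial>mu_eps \<omega> \<epsilon>)^2 \<le> V * B"
proof -
  have bi: "integrable (mu_eps \<omega> \<epsilon>) (\<lambda>z. (b z)^2)" by (rule mu_eps_integrable[OF e, where r=r]) (simp add: b0)
  have abi: "integrable (mu_eps \<omega> \<epsilon>) (\<lambda>z. a z * b z)" by (rule mu_eps_integrable[OF e, where r=r]) (simp add: b0)
  have "(\<integral>z. a z * b z \<partial>mu_eps \<omega> \<epsilon>)^2 \<le> (\<integral>z. (a z)^2 \<partial>mu_eps \<omega> \<epsilon>) * (\<integral>z. (b z)^2 \<partial>mu_eps \<omega> \<epsilon>)"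
    by (rule CS_integral[OF ai bi abi])
  also have "\<dots> \<le> V * B"
    by (rule mult_mono[OF aV bB]) (use aV order_trans[OF Bochner_Integration.integral_nonneg aV] in auto)
  finally show ?thesis .
qed

lemma lim_CS:
  fixes v w :: "'a::euclidean_space \<times> 'b \<Rightarrow> real"
  assumes fm: "finite_measure M2"
    and vm: "v \<in> borel_measurable (lborel \<Otimes>\<^sub>M M2)" and vi: "integrable (lborel \<Otimes>\<^sub>M M2) (\<lambda>p. (v p)^2)"
    and wm: "w \<in> borel_measurable (lborel \<Otimes>\<^sub>M M2)" and wi: "integrable (lborel \<Otimes>\<^sub>M M2) (\<lambda>p. (w p)^2)"
    and wB: "(\<integral>p. (w p)^2 \<partial>(lborel \<Otimes>\<^sub>M M2)) \<le> B"
  shows "(\<integral>p. v p * w p \<partial>(lborel \<Otimes>\<^sub>M M2))^2 \<le> (\<integral>p. (v p)^2 \<partial>(lborel \<Otimes>\<^sub>M M2)) * B"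
proof -
  have "(\<integral>p. v p * w p \<partial>(lborel \<Otimes>\<^sub>M M2))^2 \<le> (\<integral>p. (v p)^2 \<partial>(lborel \<Otimes>\<^sub>M M2)) * (\<integral>p. (w p)^2 \<partial>(lborel \<Otimes>\<^sub>M M2))"
    by (rule prod_L2(2)[OF assms(1-5)])
  also have "\<dots> \<le> (\<integral>p. (v p)^2 \<partial>(lborel \<Otimes>\<^sub>M M2)) * B"
    by (rule mult_left_mono[OF wB]) simp
  finally show ?thesis .
qed

lemma cube_cbox: "cube r = cbox (vec (-r)) (vec r :: real ^ 'd::finite)"
  by (auto simp: cube_def mem_box_cart)

lemma cube_borel[measurable]: "cube r \<in> sets (borel :: (real ^ 'd::finite) measure)"
  unfolding cube_cbox by (rule borel_closed) (rule closed_cbox)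

lemma cube_bounded: "bounded (cube r :: (real ^ 'd::finite) set)"
  unfolding cube_cbox by simp

lemma arith_help: "0 \<le> (x::real) \<Longrightarrow> x \<le> S \<Longrightarrow> 0 < S \<Longrightarrow> 0 \<le> \<theta> \<Longrightarrow> x * (\<theta> / S) \<le> \<theta>"
proof -
  assume a: "0 \<le> x" "x \<le> S" "0 < S" "0 \<le> \<theta>"
  have "x * (\<theta> / S) = \<theta> * (x / S)" by simp
  also have "\<dots> \<le> \<theta> * 1" using a by (intro mult_left_mono) auto
  finally show ?thesis by simp
qed

lemma sqrt_lt_sq: "0 \<le> (y::real) \<Longrightarrow> sqrt y < C \<Longrightarrow> y \<le> C^2"
proof -
  assume a: "0 \<le> y" "sqrt y < C"
  have "(sqrt y)^2 \<le> C^2" using a by (intro power_mono) auto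
  then show ?thesis using a by simp
qed

lemma ereal_bound: "(L::ereal) < \<infinity> \<Longrightarrow> \<exists>C. L < ereal C"
  by (cases L) (auto intro: exI[of _ 0] gt_ex)

lemma sq_bound_ind:
  fixes c u C U :: real
  assumes "\<bar>c\<bar> \<le> C * indicator K z" "\<bar>u\<bar> \<le> U" "C \<ge> 0"
  shows "(c * u)^2 \<le> C^2 * U^2 * indicator K z"
proof -
  have "\<bar>c * u\<bar> \<le> C * indicator K z * U"
    unfolding abs_mult by (rule mult_mono[OF assms(1,2)]) (use assms in auto)
  then have "(c * u)^2 \<le> (C * indicator K z * U)^2"
    using abs_le_square_iff[of "c*u" "C * indicator K z * U"] assms(2,3) by (simp add: indicator_def)
  then show ?thesis by (cases "z \<in> K") (simp_all add: power_mult_distrib)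
qed

lemma sq_bound_ind2:
  fixes c u C :: real
  assumes "\<bar>c\<bar> \<le> C * indicator K z" "C \<ge> 0"
  shows "(c * u)^2 \<le> C^2 * (indicator K z * u^2)"
proof -
  have "c^2 \<le> (C * indicator K z)^2"
    using abs_le_square_iff[of c "C * indicator K z"] assms by (simp add: indicator_def)
  then have "c^2 * u^2 \<le> (C * indicator K z)^2 * u^2" by (rule mult_right_mono) simp
  then show ?thesis by (cases "z \<in> K") (simp_all add: power_mult_distrib)
qed

theorem mainTheorem10:
  fixes c0 :: real and Q :: "('d::finite) env measure"
    and \<psi> :: "nat \<Rightarrow> 'd env \<times> (int ^ 'd) \<Rightarrow> real"
    and f :: "nat \<Rightarrow> int ^ 'd \<Rightarrow> nat \<Rightarrow> 'd env \<Rightarrow> real"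
    and \<omega> :: "'d env"
    and v\<epsilon> :: "real \<Rightarrow> real ^ 'd \<Rightarrow> real" and v :: "(real ^ 'd) \<times> 'd env \<Rightarrow> real"
    and j :: nat and e :: "int ^ 'd"
    and g :: "'d env \<Rightarrow> real" and \<phi> :: "real ^ 'd \<Rightarrow> real"
  assumes "standing c0 Q"
    and "regular_data c0 Q \<psi> f"
    and "\<omega> \<in> Omega_star c0 Q \<psi> f"
    and "two_scale_weak c0 Q \<omega> v\<epsilon> v"
    and "e \<in> Bset"
    and "continuous_on (Omega c0) g"
    and "Cc \<phi>"
  shows "((\<lambda>\<epsilon>. \<integral>x. v\<epsilon> \<epsilon> x * \<phi> x * g (tau_r ((1 / \<epsilon>) *\<^sub>R x) \<omega>) * Psi \<psi> j e (tau_r ((1 / \<epsilon>) *\<^sub>R x) \<omega>) \<partial>mu_eps \<omega> \<epsilon>)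
          \<longlongrightarrow> (\<integral>x. (\<integral>\<omega>'. v (x, \<omega>') * \<phi> x * g \<omega>' * Psi \<psi> j e \<omega>' \<partial>mu c0 Q) \<partial>lborel)) (at_right 0)"
proof -
  note st = assms(1) and rd = assms(2) and ts = assms(4) and eB = assms(5) and gc = assms(6) and phiC = assms(7)
  have om1: "\<omega> \<in> Omega1 c0 Q" using assms(3) unfolding Omega_star_def by blast
  have omj: "\<omega> \<in> Omega_star_j c0 Q \<psi> f j" using assms(3) unfolding Omega_star_def by blast
  have "\<omega> \<in> Omega0 c0" using om1 unfolding Omega1_def by blast
  then have omO: "\<omega> \<in> Omega c0" unfolding Omega0_def by blast
  define T where "T \<epsilon> x = tau_r ((1 / \<epsilon>) *\<^sub>R x) \<omega>" for \<epsilon> x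
  have TO: "T \<epsilon> x \<in> Omega c0" for \<epsilon> x unfolding T_def by (rule tau_r_Omega[OF omO])
  obtain G where G: "G \<ge> 0" "\<And>y. y \<in> Omega c0 \<Longrightarrow> \<bar>g y\<bar> \<le> G"
    using bounded_on_Omega[OF gc] by blast
  have phicont: "continuous_on UNIV \<phi>" using phiC by (simp add: Cc_def)
  obtain R where R: "R > 0" "\<And>x. norm x \<ge> R \<Longrightarrow> \<phi> x = 0"
  proof -
    have "bounded (closure {x. \<phi> x \<noteq> 0})" using phiC by (simp add: Cc_def compact_imp_bounded)
    then obtain B where B: "\<forall>x\<in>closure {x. \<phi> x \<noteq> 0}. norm x \<le> B" unfolding bounded_iff by blast
    show ?thesis
    proof (rule that[of "max B 0 + 1"])
      fix x :: "real^'d" assume x: "norm x \<ge> max B 0 + 1"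
      show "\<phi> x = 0"
      proof (rule ccontr)
        assume "\<phi> x \<noteq> 0"
        then have "x \<in> closure {x. \<phi> x \<noteq> 0}" by (rule closure_subset[THEN subsetD, OF CollectI])
        then have "norm x \<le> B" using B by blast
        with x show False using max.cobounded1[of B 0] by linarith
      qed
    qed simp
  qed
  define n :: nat where "n = nat \<lceil>R + 1\<rceil>"
  have "real n = real_of_int \<lceil>R + 1\<rceil>" unfolding n_def using R by simp
  then have nR: "real n \<ge> R + 1" using le_of_int_ceiling[of "R+1"] by simp
  have npos: "real n > 0" using nR R by linarith
  have outcube: "norm z \<ge> R + 1" if "z \<notin> cube (real n)" for z :: "real^'d"
  proof (rule ccontr)
    assume "\<not> norm z \<ge> R + 1"
    then have "\<bar>z $ i\<bar> \<le> real n" for i using component_le_norm_cart[of z i] nR by linarith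
    then have "- real n \<le> z $ i \<and> z $ i \<le> real n" for i by (metis abs_le_D1 abs_le_D2 minus_le_iff)
    then show False using that unfolding cube_def by blast
  qed
  have phi0: "\<phi> z = 0" if "z \<notin> cube (real n)" for z using R(2) outcube[OF that] R by simp
  obtain Phi where Phi: "Phi \<ge> 0" "\<And>x. \<bar>\<phi> x\<bar> \<le> Phi"
  proof -
    have "compact (\<phi> ` cball 0 R)"
      by (rule compact_continuous_image[OF continuous_on_subset[OF phicont] compact_cball]) simp
    then obtain B where B: "\<forall>y\<in>\<phi> ` cball 0 R. norm y \<le> B" using compact_imp_bounded bounded_iff by metis
    define B' where "B' = max B 0"
    have B'0: "B' \<ge> 0" "B \<le> B'" unfolding B'_def by auto
    have "\<bar>\<phi> x\<bar> \<le> B'" for x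
    proof (cases "norm x \<le> R")
      case True
      then have "\<phi> x \<in> \<phi> ` cball 0 R" by simp
      then have "norm (\<phi> x) \<le> B" using B by blast
      then show ?thesis using B'0 by simp
    next
      case False
      then show ?thesis using R(2)[of x] B'0 by simp
    qed
    then show ?thesis using that[of B'] B'0 by blast
  qed
  have phiind: "\<bar>\<phi> x\<bar> \<le> Phi * indicator (cube (real n)) x" for x
    using Phi phi0[of x] by (auto simp: indicator_def)
  obtain C0 where C0: "Limsup (at_right 0) (\<lambda>\<epsilon>. ereal (sqrt (\<integral>x. (v\<epsilon> \<epsilon> x)\<^sup>2 \<partial>mu_eps \<omega> \<epsilon>))) < ereal C0"
  proof -
    have "Limsup (at_right 0) (\<lambda>\<epsilon>. ereal (sqrt (\<integral>x. (v\<epsilon> \<epsilon> x)\<^sup>2 \<partial>mu_eps \<omega> \<epsilon>))) < \<infinity>"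
      using ts unfolding two_scale_weak_def by blast
    from ereal_bound[OF this] show ?thesis using that by blast
  qed
  define V where "V = C0^2"
  have V0: "V \<ge> 0" by (simp add: V_def)
  have evV: "eventually (\<lambda>\<epsilon>. (\<integral>x. (v\<epsilon> \<epsilon> x)\<^sup>2 \<partial>mu_eps \<omega> \<epsilon>) \<le> V) (at_right 0)"
    using Limsup_lessD[OF C0] by eventually_elim (auto simp: V_def intro!: sqrt_lt_sq)
  have evpos: "eventually (\<lambda>\<epsilon>::real. \<epsilon> > 0) (at_right 0)" by (simp add: eventually_at_filter)
  have vL2: "\<And>\<epsilon>. \<epsilon> > 0 \<Longrightarrow> integrable (mu_eps \<omega> \<epsilon>) (\<lambda>x. (v\<epsilon> \<epsilon> x)^2)"
    using ts by (auto simp: two_scale_weak_def L2_def)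
  have vm: "v \<in> borel_measurable (lborel \<Otimes>\<^sub>M mu c0 Q)" and vi: "integrable (lborel \<Otimes>\<^sub>M mu c0 Q) (\<lambda>p. (v p)^2)"
    using ts by (auto simp: two_scale_weak_def L2_def)
  define Vv where "Vv = (\<integral>p. (v p)^2 \<partial>(lborel \<Otimes>\<^sub>M mu c0 Q))"
  have Vv0: "Vv \<ge> 0" unfolding Vv_def by simp
  have fm: "finite_measure (mu c0 Q)" by (rule finite_mu[OF st])
  interpret M2: finite_measure "mu c0 Q" by (rule fm)
  interpret P: pair_sigma_finite lborel "mu c0 Q" ..
  define Mc where "Mc = mdens c0 Q * (2 * real n) ^ CARD('d) + 1"
  have Mc0: "Mc \<ge> 0" unfolding Mc_def mdens_def by simp
  have evM: "eventually (\<lambda>\<epsilon>. measure (mu_eps \<omega> \<epsilon>) (cube (real n)) \<le> Mc) (at_right 0)"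
  proof -
    have "((\<lambda>\<epsilon>. measure (mu_eps \<omega> \<epsilon>) (cube (real n))) \<longlongrightarrow> mdens c0 Q * (2 * real n) ^ CARD('d)) (at_right 0)"
      using om1 npos by (auto simp: Omega1_def)
    from order_tendstoD(2)[OF this, of Mc] show ?thesis unfolding Mc_def by (auto elim: eventually_mono)
  qed
  define lK where "lK = measure lborel (cube (real n) :: (real^'d) set)"
  have lK0: "lK \<ge> 0" by (simp add: lK_def)
  define mm where "mm = measure (mu c0 Q) (space (mu c0 Q))"
  have mm0: "mm \<ge> 0" by (simp add: mm_def)
  define D where "D k = (\<integral>\<omega>'. (f j e k \<omega>' - Psi \<psi> j e \<omega>')\<^sup>2 \<partial>mu c0 Q)" for k
  have Dint: "integrable (mu c0 Q) (\<lambda>\<omega>'. (f j e k \<omega>' - Psi \<psi> j e \<omega>')\<^sup>2)" for k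
    using rd eB by (auto simp: regular_data_def)
  have Dlim: "D \<longlonglongrightarrow> 0"
  proof -
    have "(\<lambda>k. \<integral>\<omega>'. (f j e k \<omega>' - Psi \<psi> j e \<omega>')\<^sup>2 \<partial>mu c0 Q) \<longlonglongrightarrow> 0"
      using rd eB unfolding regular_data_def by blast
    moreover have "D = (\<lambda>k. \<integral>\<omega>'. (f j e k \<omega>' - Psi \<psi> j e \<omega>')\<^sup>2 \<partial>mu c0 Q)"
      by (simp add: D_def fun_eq_iff)
    ultimately show ?thesis by simp
  qed
  have D0: "D k \<ge> 0" for k by (simp add: D_def)
  have fcont: "continuous_on (Omega c0) (f j e k)" for k using rd eB by (auto simp: regular_data_def)
  have Psim: "Psi \<psi> j e \<in> borel_measurable (mu c0 Q)" by (rule Psi_meas[OF st rd eB])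
  have gm: "g \<in> borel_measurable (mu c0 Q)" by (rule cont_meas_mu[OF st gc])
  have fmeas: "f j e k \<in> borel_measurable (mu c0 Q)" for k by (rule cont_meas_mu[OF st fcont])
  have phim: "\<phi> \<in> borel_measurable borel" by (rule borel_measurable_continuous_onI[OF phicont])
  have Xlim: "((\<lambda>\<epsilon>. \<integral>z. indicator (cube (real n)) z *
               (f j e k (T \<epsilon> z) - Psi \<psi> j e (T \<epsilon> z))\<^sup>2 \<partial>mu_eps \<omega> \<epsilon>)
         \<longlongrightarrow> (2 * real n) ^ CARD('d) * D k) (at_right 0)" for k
    using omj eB unfolding Omega_star_j_def D_def T_def by auto
  show ?thesis
  proof (rule approx_lim)
    fix \<eta> :: real assume \<eta>: "\<eta> > 0"
    define \<theta> where "\<theta> = (\<eta>/4)^2"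
    have \<theta>: "\<theta> > 0" using \<eta> by (simp add: \<theta>_def)
    define c1 where "c1 = \<theta> / (2 * (V * Phi^2 * G^2 + 1))"
    have c1: "c1 > 0" using \<theta> V0 by (simp add: c1_def add_nonneg_pos)
    define c2 where "c2 = \<theta> / (Vv * Phi^2 * lK * G^2 + 1)"
    have c2: "c2 > 0" using \<theta> Vv0 lK0 by (simp add: c2_def add_nonneg_pos)
    have n2: "(2 * real n) ^ CARD('d) > 0" using npos by simp
    obtain k where k1: "(2 * real n) ^ CARD('d) * D k \<le> c1" and k2: "D k \<le> c2"
    proof -
      have "eventually (\<lambda>k. D k < min (c1 / (2 * real n) ^ CARD('d)) c2) sequentially"
        by (rule order_tendstoD(2)[OF Dlim]) (use c1 c2 n2 in simp)
      then obtain k where "D k < min (c1 / (2 * real n) ^ CARD('d)) c2"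
        by (auto simp: eventually_sequentially)
      then show ?thesis using that[of k] n2 by (auto simp: pos_less_divide_eq mult.commute less_imp_le)
    qed
    obtain F where F: "F \<ge> 0" "\<And>y. y \<in> Omega c0 \<Longrightarrow> \<bar>f j e k y\<bar> \<le> F"
      using bounded_on_Omega[OF fcont[of k]] by blast
    define S where "S = V * (G*F)^2 * Mc + Vv * lK * (G*F)^2 * mm + 1"
    have S: "S > 0" unfolding S_def using V0 Vv0 lK0 mm0 Mc0 by (intro add_nonneg_pos) auto
    define \<delta> where "\<delta> = sqrt (\<theta> / S)"
    have \<delta>: "\<delta> > 0" unfolding \<delta>_def using \<theta> S by simp
    have \<delta>2: "\<delta>^2 = \<theta> / S" unfolding \<delta>_def using \<theta> S by simp
    obtain \<phi>' where phi': "Cc_inf \<phi>'" "\<And>x. \<bar>\<phi> x - \<phi>' x\<bar> \<le> \<delta>" "\<And>x. norm x \<ge> R + 1 \<Longrightarrow> \<phi>' x = 0"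
      using approx_Cc[OF phicont R(1) R(2) \<delta>] by blast
    have phi'0: "\<phi>' z = 0" if "z \<notin> cube (real n)" for z using phi'(3) outcube[OF that] by simp
    have phi'cont: "continuous_on UNIV \<phi>'" using phi'(1) by (auto simp: Cc_inf_def dest: spec[of _ 0])
    have phi'm: "\<phi>' \<in> borel_measurable borel" by (rule borel_measurable_continuous_onI[OF phi'cont])
    have gfc: "continuous_on (Omega c0) (\<lambda>\<omega>. g \<omega> * f j e k \<omega>)" by (intro continuous_on_mult gc fcont)
    define A where "A \<epsilon> = (\<integral>x. v\<epsilon> \<epsilon> x * \<phi>' x * (g (T \<epsilon> x) * f j e k (T \<epsilon> x)) \<partial>mu_eps \<omega> \<epsilon>)" for \<epsilon>
    define a where "a = (\<integral>x. (\<integral>\<omega>'. v (x, \<omega>') * \<phi>' x * (g \<omega>' * f j e k \<omega>') \<partial>mu c0 Q) \<partial>lborel)"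
    have Alim: "(A \<longlongrightarrow> a) (at_right 0)"
      using ts phi'(1) gfc unfolding two_scale_weak_def A_def a_def T_def by blast
    have u1m: "(\<lambda>y. g y * f j e k y) \<in> borel_measurable (mu c0 Q)" using gm fmeas[of k] by measurable
    have u1b: "\<bar>g y * f j e k y\<bar> \<le> G * F" if "y \<in> space (mu c0 Q)" for y
    proof -
      have y: "y \<in> Omega c0" using that space_mu[OF st] by simp
      show ?thesis unfolding abs_mult by (rule mult_mono[OF G(2)[OF y] F(2)[OF y]]) (use G in auto)
    qed
    have u1i: "integrable (mu c0 Q) (\<lambda>y. (g y * f j e k y)^2)"
      by (rule bounded_sq_int(1)[OF fm u1m u1b])
    have u1I: "(\<integral>y. (g y * f j e k y)^2 \<partial>mu c0 Q) \<le> (G*F)^2 * mm"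
      unfolding mm_def by (rule bounded_sq_int(2)[OF fm u1m u1b])
    define u2 where "u2 y = g y * (f j e k y - Psi \<psi> j e y)" for y
    have u2m: "u2 \<in> borel_measurable (mu c0 Q)" unfolding u2_def using gm fmeas[of k] Psim by measurable
    have u2le: "(u2 y)^2 \<le> G^2 * (f j e k y - Psi \<psi> j e y)^2" if "y \<in> space (mu c0 Q)" for y
    proof -
      have y: "y \<in> Omega c0" using that space_mu[OF st] by simp
      have "(g y)^2 \<le> G^2" using G(2)[OF y] G(1) abs_le_square_iff[of "g y" G] by simp
      then show ?thesis unfolding u2_def power_mult_distrib by (rule mult_right_mono) simp
    qed
    have u2i: "integrable (mu c0 Q) (\<lambda>y. (u2 y)^2)"
    proof (rule Bochner_Integration.integrable_bound[of _ "\<lambda>y. G^2 * (f j e k y - Psi \<psi> j e y)^2"])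
      show "integrable (mu c0 Q) (\<lambda>y. G^2 * (f j e k y - Psi \<psi> j e y)^2)" using Dint[of k] by simp
      show "(\<lambda>y. (u2 y)^2) \<in> borel_measurable (mu c0 Q)" using u2m by measurable
      show "AE y in mu c0 Q. norm ((u2 y)^2) \<le> norm (G^2 * (f j e k y - Psi \<psi> j e y)^2)"
        using u2le by (intro AE_I2) simp
    qed
    have u2I: "(\<integral>y. (u2 y)^2 \<partial>mu c0 Q) \<le> G^2 * D k"
    proof -
      have "(\<integral>y. (u2 y)^2 \<partial>mu c0 Q) \<le> (\<integral>y. G^2 * (f j e k y - Psi \<psi> j e y)^2 \<partial>mu c0 Q)"
        by (rule Bochner_Integration.integral_mono[OF u2i _ u2le]) (use Dint[of k] in simp)
      then show ?thesis by (simp add: D_def)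
    qed
    have phimL: "\<phi> \<in> borel_measurable lborel" using phim by simp
    have phi'mL: "\<phi>' \<in> borel_measurable lborel" using phi'm by simp
    have phi'ind: "\<bar>\<phi>' x\<bar> \<le> (Phi + \<delta>) * indicator (cube (real n)) x" for x
    proof (cases "x \<in> cube (real n)")
      case True
      have "\<bar>\<phi>' x\<bar> \<le> \<bar>\<phi> x\<bar> + \<bar>\<phi> x - \<phi>' x\<bar>" by simp
      also have "\<dots> \<le> Phi + \<delta>" using Phi(2)[of x] phi'(2)[of x] by simp
      finally show ?thesis using True by simp
    next
      case False then show ?thesis using phi'0[OF False] by simp
    qed
    have dind: "\<bar>\<phi>' x - \<phi> x\<bar> \<le> \<delta> * indicator (cube (real n)) x" for x
    proof (cases "x \<in> cube (real n)")
      case True then show ?thesis using phi'(2)[of x] by (simp add: abs_minus_commute)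
    next
      case False then show ?thesis using phi'0[OF False] phi0[OF False] by simp
    qed
    have dm: "(\<lambda>x. \<phi>' x - \<phi> x) \<in> borel_measurable borel" using phim phi'm by measurable
    define wf where "wf p = \<phi> (fst p) * (g (snd p) * f j e k (snd p))" for p :: "(real^'d) \<times> 'd env"
    define wf' where "wf' p = \<phi>' (fst p) * (g (snd p) * f j e k (snd p))" for p :: "(real^'d) \<times> 'd env"
    define wA where "wA p = (\<phi>' (fst p) - \<phi> (fst p)) * (g (snd p) * f j e k (snd p))" for p :: "(real^'d) \<times> 'd env"
    define wB where "wB p = \<phi> (fst p) * u2 (snd p)" for p :: "(real^'d) \<times> 'd env"
    have Kb: "cube (real n) \<in> sets (borel :: (real^'d) measure)" "bounded (cube (real n) :: (real^'d) set)"
      by (rule cube_borel, rule cube_bounded)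
    have wfi: "integrable (lborel \<Otimes>\<^sub>M mu c0 Q) (\<lambda>p. (wf p)^2)"
      unfolding wf_def by (rule sep_L2(1)[OF fm phim Kb phiind Phi(1) u1m u1i])
    have wf'i: "integrable (lborel \<Otimes>\<^sub>M mu c0 Q) (\<lambda>p. (wf' p)^2)"
      unfolding wf'_def by (rule sep_L2(1)[OF fm phi'm Kb phi'ind _ u1m u1i]) (use Phi(1) \<delta> in simp)
    have wAi: "integrable (lborel \<Otimes>\<^sub>M mu c0 Q) (\<lambda>p. (wA p)^2)"
      unfolding wA_def by (rule sep_L2(1)[OF fm dm Kb dind _ u1m u1i]) (use \<delta> in simp)
    have wBi: "integrable (lborel \<Otimes>\<^sub>M mu c0 Q) (\<lambda>p. (wB p)^2)"
      unfolding wB_def by (rule sep_L2(1)[OF fm phim Kb phiind Phi(1) u2m u2i])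
    have wAI: "(\<integral>p. (wA p)^2 \<partial>(lborel \<Otimes>\<^sub>M mu c0 Q)) \<le> \<delta>^2 * lK * ((G*F)^2 * mm)"
    proof -
      have "(\<integral>p. (wA p)^2 \<partial>(lborel \<Otimes>\<^sub>M mu c0 Q)) \<le> \<delta>^2 * lK * (\<integral>y. (g y * f j e k y)^2 \<partial>mu c0 Q)"
        unfolding wA_def lK_def by (rule sep_L2(2)[OF fm dm Kb dind _ u1m u1i]) (use \<delta> in simp)
      also have "\<dots> \<le> \<delta>^2 * lK * ((G*F)^2 * mm)"
        by (rule mult_left_mono[OF u1I]) (use lK0 in simp)
      finally show ?thesis .
    qed
    have wBI: "(\<integral>p. (wB p)^2 \<partial>(lborel \<Otimes>\<^sub>M mu c0 Q)) \<le> Phi^2 * lK * (G^2 * D k)"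
    proof -
      have "(\<integral>p. (wB p)^2 \<partial>(lborel \<Otimes>\<^sub>M mu c0 Q)) \<le> Phi^2 * lK * (\<integral>y. (u2 y)^2 \<partial>mu c0 Q)"
        unfolding wB_def lK_def by (rule sep_L2(2)[OF fm phim Kb phiind Phi(1) u2m u2i])
      also have "\<dots> \<le> Phi^2 * lK * (G^2 * D k)"
        by (rule mult_left_mono[OF u2I]) (use lK0 in simp)
      finally show ?thesis .
    qed
    have wfm: "wf \<in> borel_measurable (lborel \<Otimes>\<^sub>M mu c0 Q)" unfolding wf_def using phimL gm fmeas[of k] by measurable
    have wf'm: "wf' \<in> borel_measurable (lborel \<Otimes>\<^sub>M mu c0 Q)" unfolding wf'_def using phi'mL gm fmeas[of k] by measurable
    have wAm: "wA \<in> borel_measurable (lborel \<Otimes>\<^sub>M mu c0 Q)" unfolding wA_def using phimL phi'mL gm fmeas[of k] by measurable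
    have wBm: "wB \<in> borel_measurable (lborel \<Otimes>\<^sub>M mu c0 Q)" unfolding wB_def using phimL u2m by measurable
    note pf = prod_L2[OF fm vm vi wfm wfi]
    note pf' = prod_L2[OF fm vm vi wf'm wf'i]
    note pA = prod_L2[OF fm vm vi wAm wAi]
    note pB = prod_L2[OF fm vm vi wBm wBi]
    have Jeq: "(\<integral>x. (\<integral>\<omega>'. v (x, \<omega>') * \<phi> x * g \<omega>' * Psi \<psi> j e \<omega>' \<partial>mu c0 Q) \<partial>lborel)
        = (\<integral>p. v p * wf p \<partial>(lborel \<Otimes>\<^sub>M mu c0 Q)) - (\<integral>p. v p * wB p \<partial>(lborel \<Otimes>\<^sub>M mu c0 Q))"
    proof -
      have "(\<integral>x. (\<integral>\<omega>'. v (x, \<omega>') * \<phi> x * g \<omega>' * Psi \<psi> j e \<omega>' \<partial>mu c0 Q) \<partial>lborel)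
          = (\<integral>x. (\<integral>\<omega>'. v (x, \<omega>') * wf (x, \<omega>') - v (x, \<omega>') * wB (x, \<omega>') \<partial>mu c0 Q) \<partial>lborel)"
        by (intro Bochner_Integration.integral_cong refl) (simp add: wf_def wB_def u2_def algebra_simps)
      also have "\<dots> = (\<integral>p. v p * wf p - v p * wB p \<partial>(lborel \<Otimes>\<^sub>M mu c0 Q))"
        using P.integral_fst'[OF Bochner_Integration.integrable_diff[OF pf(1) pB(1)]] by simp
      also have "\<dots> = (\<integral>p. v p * wf p \<partial>(lborel \<Otimes>\<^sub>M mu c0 Q)) - (\<integral>p. v p * wB p \<partial>(lborel \<Otimes>\<^sub>M mu c0 Q))"
        by (rule Bochner_Integration.integral_diff[OF pf(1) pB(1)])
      finally show ?thesis .
    qed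
    have aeq: "a = (\<integral>p. v p * wf' p \<partial>(lborel \<Otimes>\<^sub>M mu c0 Q))"
    proof -
      have "a = (\<integral>x. (\<integral>\<omega>'. v (x, \<omega>') * wf' (x, \<omega>') \<partial>mu c0 Q) \<partial>lborel)"
        unfolding a_def by (intro Bochner_Integration.integral_cong refl) (simp add: wf'_def)
      then show ?thesis using pf'(3) by simp
    qed
    have diffA: "(\<integral>p. v p * wf' p \<partial>(lborel \<Otimes>\<^sub>M mu c0 Q)) - (\<integral>p. v p * wf p \<partial>(lborel \<Otimes>\<^sub>M mu c0 Q))
        = (\<integral>p. v p * wA p \<partial>(lborel \<Otimes>\<^sub>M mu c0 Q))"
    proof -
      have "(\<integral>p. v p * wf' p \<partial>(lborel \<Otimes>\<^sub>M mu c0 Q)) - (\<integral>p. v p * wf p \<partial>(lborel \<Otimes>\<^sub>M mu c0 Q))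
          = (\<integral>p. v p * wf' p - v p * wf p \<partial>(lborel \<Otimes>\<^sub>M mu c0 Q))"
        by (rule Bochner_Integration.integral_diff[OF pf'(1) pf(1), symmetric])
      also have "\<dots> = (\<integral>p. v p * wA p \<partial>(lborel \<Otimes>\<^sub>M mu c0 Q))"
        by (intro Bochner_Integration.integral_cong refl) (simp add: wf_def wf'_def wA_def algebra_simps)
      finally show ?thesis .
    qed
    have bA: "(\<integral>p. v p * wA p \<partial>(lborel \<Otimes>\<^sub>M mu c0 Q))^2 \<le> (\<eta>/4)^2"
    proof -
      have "(\<integral>p. v p * wA p \<partial>(lborel \<Otimes>\<^sub>M mu c0 Q))^2 \<le> Vv * (\<delta>^2 * lK * ((G*F)^2 * mm))"
        unfolding Vv_def by (rule lim_CS[OF fm vm vi wAm wAi wAI])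
      also have "\<dots> = (Vv * lK * (G*F)^2 * mm) * (\<theta> / S)" by (simp add: \<delta>2 mult_ac)
      also have "\<dots> \<le> \<theta>"
        by (rule arith_help) (use Vv0 lK0 mm0 V0 Mc0 S \<theta> in \<open>auto simp: S_def\<close>)
      finally show ?thesis by (simp add: \<theta>_def)
    qed
    have bB: "(\<integral>p. v p * wB p \<partial>(lborel \<Otimes>\<^sub>M mu c0 Q))^2 \<le> (\<eta>/4)^2"
    proof -
      define x where "x = Vv * Phi^2 * lK * G^2"
      have x0: "x \<ge> 0" unfolding x_def using Vv0 lK0 by simp
      have "(\<integral>p. v p * wB p \<partial>(lborel \<Otimes>\<^sub>M mu c0 Q))^2 \<le> Vv * (Phi^2 * lK * (G^2 * D k))"
        unfolding Vv_def by (rule lim_CS[OF fm vm vi wBm wBi wBI])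
      also have "\<dots> = x * D k" by (simp add: x_def mult_ac)
      also have "\<dots> \<le> x * (\<theta> / (x + 1))"
        using k2 x0 unfolding c2_def x_def by (intro mult_left_mono) auto
      also have "\<dots> \<le> \<theta>" by (rule arith_help) (use x0 \<theta> in auto)
      finally show ?thesis by (simp add: \<theta>_def)
    qed
    have aclose: "\<bar>(\<integral>x. (\<integral>\<omega>'. v (x, \<omega>') * \<phi> x * g \<omega>' * Psi \<psi> j e \<omega>' \<partial>mu c0 Q) \<partial>lborel) - a\<bar> \<le> \<eta>"
    proof -
      have eq: "(\<integral>x. (\<integral>\<omega>'. v (x, \<omega>') * \<phi> x * g \<omega>' * Psi \<psi> j e \<omega>' \<partial>mu c0 Q) \<partial>lborel) - a
          = - ((\<integral>p. v p * wA p \<partial>(lborel \<Otimes>\<^sub>M mu c0 Q)) + (\<integral>p. v p * wB p \<partial>(lborel \<Otimes>\<^sub>M mu c0 Q)))"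
        using Jeq aeq diffA by simp
      have "\<bar>\<integral>p. v p * wA p \<partial>(lborel \<Otimes>\<^sub>M mu c0 Q)\<bar> \<le> \<eta>/4" by (rule sq_to_abs[OF bA]) (use \<eta> in simp)
      moreover have "\<bar>\<integral>p. v p * wB p \<partial>(lborel \<Otimes>\<^sub>M mu c0 Q)\<bar> \<le> \<eta>/4" by (rule sq_to_abs[OF bB]) (use \<eta> in simp)
      ultimately show ?thesis unfolding eq using \<eta> by linarith
    qed
    have evX: "eventually (\<lambda>\<epsilon>. (\<integral>z. indicator (cube (real n)) z * (f j e k (T \<epsilon> z) - Psi \<psi> j e (T \<epsilon> z))\<^sup>2 \<partial>mu_eps \<omega> \<epsilon>) \<le> (2 * real n) ^ CARD('d) * D k + c1) (at_right 0)"
      using order_tendstoD(2)[OF Xlim[of k], of "(2 * real n) ^ CARD('d) * D k + c1"] c1 by (auto elim: eventually_mono)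
    have Aclose: "eventually (\<lambda>\<epsilon>. \<bar>(\<integral>x. v\<epsilon> \<epsilon> x * \<phi> x * g (tau_r ((1 / \<epsilon>) *\<^sub>R x) \<omega>) * Psi \<psi> j e (tau_r ((1 / \<epsilon>) *\<^sub>R x) \<omega>) \<partial>mu_eps \<omega> \<epsilon>) - A \<epsilon>\<bar> \<le> \<eta>) (at_right 0)"
      using evpos evV evM evX
    proof eventually_elim
      case (elim \<epsilon>)
      note e = elim(1)
      define bA where "bA z = (\<phi> z - \<phi>' z) * (g (T \<epsilon> z) * f j e k (T \<epsilon> z))" for z
      define bB where "bB z = \<phi> z * (g (T \<epsilon> z) * (f j e k (T \<epsilon> z) - Psi \<psi> j e (T \<epsilon> z)))" for z
      have gfT: "\<bar>g (T \<epsilon> z) * f j e k (T \<epsilon> z)\<bar> \<le> G * F" for z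
        unfolding abs_mult by (rule mult_mono[OF G(2)[OF TO] F(2)[OF TO]]) (use G in auto)
      have gT: "\<bar>g (T \<epsilon> z)\<bar> \<le> G" for z by (rule G(2)[OF TO])
      have int: "integrable (mu_eps \<omega> \<epsilon>) h" if "\<And>z. z \<notin> cube (real n) \<Longrightarrow> h z = 0" for h :: "real^'d \<Rightarrow> real"
        by (rule mu_eps_integrable[OF e, where r="real n"]) (use that in auto)
      have Ieq: "(\<integral>x. v\<epsilon> \<epsilon> x * \<phi> x * g (tau_r ((1 / \<epsilon>) *\<^sub>R x) \<omega>) * Psi \<psi> j e (tau_r ((1 / \<epsilon>) *\<^sub>R x) \<omega>) \<partial>mu_eps \<omega> \<epsilon>)
          = A \<epsilon> + (\<integral>z. v\<epsilon> \<epsilon> z * bA z \<partial>mu_eps \<omega> \<epsilon>) - (\<integral>z. v\<epsilon> \<epsilon> z * bB z \<partial>mu_eps \<omega> \<epsilon>)"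
      proof -
        have "(\<integral>x. v\<epsilon> \<epsilon> x * \<phi> x * g (tau_r ((1 / \<epsilon>) *\<^sub>R x) \<omega>) * Psi \<psi> j e (tau_r ((1 / \<epsilon>) *\<^sub>R x) \<omega>) \<partial>mu_eps \<omega> \<epsilon>)
            = (\<integral>z. (v\<epsilon> \<epsilon> z * \<phi>' z * (g (T \<epsilon> z) * f j e k (T \<epsilon> z)) + v\<epsilon> \<epsilon> z * bA z) - v\<epsilon> \<epsilon> z * bB z \<partial>mu_eps \<omega> \<epsilon>)"
          by (intro Bochner_Integration.integral_cong refl) (simp add: T_def bA_def bB_def algebra_simps)
        also have "\<dots> = (\<integral>z. v\<epsilon> \<epsilon> z * \<phi>' z * (g (T \<epsilon> z) * f j e k (T \<epsilon> z)) + v\<epsilon> \<epsilon> z * bA z \<partial>mu_eps \<omega> \<epsilon>) - (\<integral>z. v\<epsilon> \<epsilon> z * bB z \<partial>mu_eps \<omega> \<epsilon>)"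
          by (rule Bochner_Integration.integral_diff) (rule int, simp add: phi0 phi'0 bA_def bB_def)+
        also have "(\<integral>z. v\<epsilon> \<epsilon> z * \<phi>' z * (g (T \<epsilon> z) * f j e k (T \<epsilon> z)) + v\<epsilon> \<epsilon> z * bA z \<partial>mu_eps \<omega> \<epsilon>)
            = A \<epsilon> + (\<integral>z. v\<epsilon> \<epsilon> z * bA z \<partial>mu_eps \<omega> \<epsilon>)"
          unfolding A_def by (rule Bochner_Integration.integral_add) (rule int, simp add: phi0 phi'0 bA_def)+
        finally show ?thesis .
      qed
      have bAI: "(\<integral>z. (bA z)^2 \<partial>mu_eps \<omega> \<epsilon>) \<le> \<delta>^2 * (G*F)^2 * Mc"
      proof -
        have "(\<integral>z. (bA z)^2 \<partial>mu_eps \<omega> \<epsilon>) \<le> (\<integral>z. \<delta>^2 * (G*F)^2 * indicator (cube (real n)) z \<partial>mu_eps \<omega> \<epsilon>)"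
        proof (rule Bochner_Integration.integral_mono)
          show "integrable (mu_eps \<omega> \<epsilon>) (\<lambda>z. (bA z)^2)" by (rule int) (simp add: bA_def phi0 phi'0)
          show "integrable (mu_eps \<omega> \<epsilon>) (\<lambda>z. \<delta>^2 * (G*F)^2 * indicator (cube (real n)) z)" by (rule int) simp
          fix z
          have "\<bar>\<phi> z - \<phi>' z\<bar> \<le> \<delta> * indicator (cube (real n)) z"
            using dind[of z] by (simp add: abs_minus_commute)
          then show "(bA z)^2 \<le> \<delta>^2 * (G*F)^2 * indicator (cube (real n)) z"
            unfolding bA_def by (rule sq_bound_ind[OF _ gfT]) (use \<delta> in simp)
        qed
        also have "\<dots> = \<delta>^2 * (G*F)^2 * measure (mu_eps \<omega> \<epsilon>) (cube (real n))"
          by (simp add: mu_eps_def)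
        also have "\<dots> \<le> \<delta>^2 * (G*F)^2 * Mc"
          by (rule mult_left_mono[OF elim(3)]) simp
        finally show ?thesis .
      qed
      have bBI: "(\<integral>z. (bB z)^2 \<partial>mu_eps \<omega> \<epsilon>) \<le> Phi^2 * G^2 * ((2 * real n) ^ CARD('d) * D k + c1)"
      proof -
        have "(\<integral>z. (bB z)^2 \<partial>mu_eps \<omega> \<epsilon>) \<le> (\<integral>z. Phi^2 * G^2 * (indicator (cube (real n)) z * (f j e k (T \<epsilon> z) - Psi \<psi> j e (T \<epsilon> z))\<^sup>2) \<partial>mu_eps \<omega> \<epsilon>)"
        proof (rule Bochner_Integration.integral_mono)
          show "integrable (mu_eps \<omega> \<epsilon>) (\<lambda>z. (bB z)^2)" by (rule int) (simp add: bB_def phi0)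
          show "integrable (mu_eps \<omega> \<epsilon>) (\<lambda>z. Phi^2 * G^2 * (indicator (cube (real n)) z * (f j e k (T \<epsilon> z) - Psi \<psi> j e (T \<epsilon> z))\<^sup>2))"
            by (rule int) simp
          fix z
          have "(bB z)^2 \<le> Phi^2 * (indicator (cube (real n)) z * (g (T \<epsilon> z) * (f j e k (T \<epsilon> z) - Psi \<psi> j e (T \<epsilon> z)))^2)"
            unfolding bB_def by (rule sq_bound_ind2[OF phiind Phi(1)])
          also have "\<dots> \<le> Phi^2 * G^2 * (indicator (cube (real n)) z * (f j e k (T \<epsilon> z) - Psi \<psi> j e (T \<epsilon> z))\<^sup>2)"
          proof -
            have "(g (T \<epsilon> z))^2 \<le> G^2" using gT[of z] G(1) abs_le_square_iff[of "g (T \<epsilon> z)" G] by simp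
            then have "indicator (cube (real n)) z * (g (T \<epsilon> z) * (f j e k (T \<epsilon> z) - Psi \<psi> j e (T \<epsilon> z)))^2
                \<le> G^2 * (indicator (cube (real n)) z * (f j e k (T \<epsilon> z) - Psi \<psi> j e (T \<epsilon> z))\<^sup>2)"
              by (simp add: power_mult_distrib indicator_def mult_right_mono)
            then show ?thesis by (simp add: mult_left_mono mult.assoc)
          qed
          finally show "(bB z)^2 \<le> Phi^2 * G^2 * (indicator (cube (real n)) z * (f j e k (T \<epsilon> z) - Psi \<psi> j e (T \<epsilon> z))\<^sup>2)" .
        qed
        also have "\<dots> = Phi^2 * G^2 * (\<integral>z. indicator (cube (real n)) z * (f j e k (T \<epsilon> z) - Psi \<psi> j e (T \<epsilon> z))\<^sup>2 \<partial>mu_eps \<omega> \<epsilon>)"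
          by simp
        also have "\<dots> \<le> Phi^2 * G^2 * ((2 * real n) ^ CARD('d) * D k + c1)"
          by (rule mult_left_mono[OF elim(4)]) simp
        finally show ?thesis .
      qed
      have b1: "(\<integral>z. v\<epsilon> \<epsilon> z * bA z \<partial>mu_eps \<omega> \<epsilon>)^2 \<le> (\<eta>/4)^2"
      proof -
        have "(\<integral>z. v\<epsilon> \<epsilon> z * bA z \<partial>mu_eps \<omega> \<epsilon>)^2 \<le> V * (\<delta>^2 * (G*F)^2 * Mc)"
          by (rule eps_CS[OF e vL2[OF e] _ elim(2) bAI, where r="real n"]) (simp add: bA_def phi0 phi'0)
        also have "\<dots> = (V * (G*F)^2 * Mc) * (\<theta> / S)" by (simp add: \<delta>2 mult_ac)
        also have "\<dots> \<le> \<theta>"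
          by (rule arith_help) (use Vv0 lK0 mm0 V0 Mc0 S \<theta> in \<open>auto simp: S_def\<close>)
        finally show ?thesis by (simp add: \<theta>_def)
      qed
      have b2: "(\<integral>z. v\<epsilon> \<epsilon> z * bB z \<partial>mu_eps \<omega> \<epsilon>)^2 \<le> (\<eta>/4)^2"
      proof -
        define x where "x = V * Phi^2 * G^2"
        have x0: "x \<ge> 0" unfolding x_def using V0 by simp
        have "(\<integral>z. v\<epsilon> \<epsilon> z * bB z \<partial>mu_eps \<omega> \<epsilon>)^2 \<le> V * (Phi^2 * G^2 * ((2 * real n) ^ CARD('d) * D k + c1))"
          by (rule eps_CS[OF e vL2[OF e] _ elim(2) bBI, where r="real n"]) (simp add: bB_def phi0)
        also have "\<dots> = x * ((2 * real n) ^ CARD('d) * D k + c1)" by (simp add: x_def mult_ac)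
        also have "\<dots> \<le> x * (2 * c1)" using k1 x0 by (intro mult_left_mono) auto
        also have "\<dots> = x * (\<theta> / (x + 1))"
        proof -
          have "2 * c1 = \<theta> / (x + 1)" unfolding c1_def x_def[symmetric] using x0 by (simp add: field_simps)
          then show ?thesis by simp
        qed
        also have "\<dots> \<le> \<theta>" by (rule arith_help) (use x0 \<theta> in auto)
        finally show ?thesis by (simp add: \<theta>_def)
      qed
      have "\<bar>\<integral>z. v\<epsilon> \<epsilon> z * bA z \<partial>mu_eps \<omega> \<epsilon>\<bar> \<le> \<eta>/4" by (rule sq_to_abs[OF b1]) (use \<eta> in simp)
      moreover have "\<bar>\<integral>z. v\<epsilon> \<epsilon> z * bB z \<partial>mu_eps \<omega> \<epsilon>\<bar> \<le> \<eta>/4" by (rule sq_to_abs[OF b2]) (use \<eta> in simp)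
      ultimately show ?case unfolding Ieq using \<eta> by linarith
    qed
    show "\<exists>A a. (A \<longlongrightarrow> a) (at_right 0) \<and> eventually (\<lambda>\<epsilon>. \<bar>(\<integral>x. v\<epsilon> \<epsilon> x * \<phi> x * g (tau_r ((1 / \<epsilon>) *\<^sub>R x) \<omega>) * Psi \<psi> j e (tau_r ((1 / \<epsilon>) *\<^sub>R x) \<omega>) \<partial>mu_eps \<omega> \<epsilon>) - A \<epsilon>\<bar> \<le> \<eta>) (at_right 0) \<and>
       \<bar>(\<integral>x. (\<integral>\<omega>'. v (x, \<omega>') * \<phi> x * g \<omega>' * Psi \<psi> j e \<omega>' \<partial>mu c0 Q) \<partial>lborel) - a\<bar> \<le> \<eta>"
      using Alim Aclose aclose by blast
  qed
qed

end
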